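(* Let $n>10$, $S=\{1,2,5\}\subset\mathbb Z_n$, and $\mathbb K$ a field of characteristic $0$ containing the $n$-th roots of unity; fix $\lambda$ with $\lambda^n=1$. For $m\ge2$ define \[A_m:=f^{(\lambda)}_{1,1,\dots,1},\quad B_m:=\sum_{i=0}^{m-1}(-1)^{m-1-i}f^{(\lambda)}_{1^i,2,1^{m-1-i}},\quad C_m:=\sum_{i=0}^{m-1}(-1)^{m-1-i}f^{(\lambda)}_{1^i,5,1^{m-1-i}},\quad D_m:=\sum_{w\in\mathrm{Sh}(1^{m-2},2,5)}(-1)^{\mathrm{inv}(w)}f^{(\lambda)}_w.\] Then $\Omega_m^{(\lambda)}(\vec C_n^{1,2,5})=\mathrm{Span}\{A_m,B_m,C_m,D_m\}$ and $\dim\Omega_m^{(\lambda)}=4$.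
   Context: GLMY path complex over a field $\mathbb K$ of characteristic $0$: elementary paths $e_{v_0\cdots v_n}$, boundary $\partial e_{v_0\cdots v_n}=\sum_{j}(-1)^j e_{v_0\cdots\widehat{v_j}\cdots v_n}$, paths with two equal consecutive vertices set to $0$; $A_n(G)$ = span of paths along arrows of $G$; $\Omega_0=A_0$, $\Omega_1=A_1$, $\Omega_n=\{u\in A_n:\partial u\in A_{n-1}\}$. The circulant digraph $\vec{C}_n^S$ has vertex set $\mathbb Z_n$ and arrows $a\to a+s$, $s\in S$. $\tau$ is induced by $a\mapsto a+1$; $\Omega_m^{(\lambda)}=\{\alpha\in\Omega_m:\tau\alpha=\lambda\alpha\}$. For a word $w=(s_1,\dots,s_m)\in S^m$, $f_w^{(\lambda)}=\sum_{a\in\mathbb Z_n}\lambda^{-a}e_{a,a+s_1,\ldots,a+s_1+\cdots+s_m}$; $1^i$ denotes $i$ consecutive letters $1$. $\mathrm{Sh}(1^{m-2},2,5)$ is the set of all rearrangements of $m-2$ ones, one $2$ and one $5$; $\mathrm{inv}(w)$ is the number of pairs $i<j$ with $w_i>w_j$ in the order $1<2<5$. *)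

theory Defs
  imports Complex_Main "HOL-Library.Function_Algebras" "HOL-Library.Multiset"
begin

(* Chains: an m-chain over the field 'a is a function from vertex lists
   (elementary paths e_{v0...vm}, vertices in Z_n represented by {0..<n})
   to coefficients; e_p corresponds to the indicator of p. *)

type_synonym 'a chain = "nat list \<Rightarrow> 'a"

definition chain_scale :: "'a::field \<Rightarrow> 'a chain \<Rightarrow> 'a chain" where
  "chain_scale c u = (\<lambda>p. c * u p)"

definition regular :: "nat list \<Rightarrow> bool" where
  "regular p \<longleftrightarrow> (\<forall>i. Suc i < length p \<longrightarrow> p ! i \<noteq> p ! Suc i)"

definition paths :: "nat \<Rightarrow> nat \<Rightarrow> nat list set" where
  "paths n m = {p. length p = Suc m \<and> set p \<subseteq> {..<n} \<and> regular p}"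

definition allowed :: "nat \<Rightarrow> nat set \<Rightarrow> nat list \<Rightarrow> bool" where
  "allowed n S p \<longleftrightarrow> set p \<subseteq> {..<n} \<and> regular p \<and>
     (\<forall>i. Suc i < length p \<longrightarrow> (\<exists>s\<in>S. p ! Suc i = (p ! i + s) mod n))"

definition A_space :: "nat \<Rightarrow> nat set \<Rightarrow> nat \<Rightarrow> ('a::field) chain set" where
  "A_space n S m = {u. \<forall>p. u p \<noteq> 0 \<longrightarrow> length p = Suc m \<and> allowed n S p}"

(* GLMY boundary of an m-chain (regular paths; non-regular faces are set to 0) *)
definition boundary :: "nat \<Rightarrow> nat \<Rightarrow> ('a::field) chain \<Rightarrow> 'a chain" where
  "boundary n m u = (\<lambda>q. if regular q then
      (\<Sum>p\<in>paths n m. \<Sum>j\<in>{..m}.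
         if take j p @ drop (Suc j) p = q then (-1) ^ j * u p else 0)
    else 0)"

definition Omega :: "nat \<Rightarrow> nat set \<Rightarrow> nat \<Rightarrow> ('a::field) chain set" where
  "Omega n S m = (if m = 0 then A_space n S 0
     else {u \<in> A_space n S m. boundary n m u \<in> A_space n S (m - 1)})"

(* tau induced by a |-> a+1: tau e_p = e_{p+1} *)
definition tau :: "nat \<Rightarrow> ('a::field) chain \<Rightarrow> 'a chain" where
  "tau n u = (\<lambda>p. if set p \<subseteq> {..<n} then u (map (\<lambda>v. (v + n - 1) mod n) p) else 0)"

definition Omega_eig :: "nat \<Rightarrow> nat set \<Rightarrow> nat \<Rightarrow> 'a::field \<Rightarrow> 'a chain set" where
  "Omega_eig n S m lam = {\<alpha> \<in> Omega n S m. tau n \<alpha> = chain_scale lam \<alpha>}"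

fun walk :: "nat \<Rightarrow> nat \<Rightarrow> nat list \<Rightarrow> nat list" where
  "walk n a [] = [a]"
| "walk n a (s # w) = a # walk n ((a + s) mod n) w"

definition fw :: "nat \<Rightarrow> 'a::field \<Rightarrow> nat list \<Rightarrow> 'a chain" where
  "fw n lam w = (\<lambda>q. \<Sum>a<n. if q = walk n a w then inverse lam ^ a else 0)"

definition word_i :: "nat \<Rightarrow> nat \<Rightarrow> nat \<Rightarrow> nat list" where
  "word_i m s i = replicate i 1 @ [s] @ replicate (m - 1 - i) 1"

definition Amw :: "nat \<Rightarrow> 'a::field \<Rightarrow> nat \<Rightarrow> 'a chain" where
  "Amw n lam m = fw n lam (replicate m 1)"

definition Bsw :: "nat \<Rightarrow> 'a::field \<Rightarrow> nat \<Rightarrow> nat \<Rightarrow> 'a chain" where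
  "Bsw n lam s m = (\<lambda>q. \<Sum>i<m. (-1) ^ (m - 1 - i) * fw n lam (word_i m s i) q)"

definition Sh :: "nat \<Rightarrow> nat list set" where
  "Sh m = {w. length w = m \<and> mset w = replicate_mset (m - 2) 1 + {#2, 5#}}"

definition inv :: "nat list \<Rightarrow> nat" where
  "inv w = card {(i, j). i < j \<and> j < length w \<and> w ! i > w ! j}"

definition Dmw :: "nat \<Rightarrow> 'a::field \<Rightarrow> nat \<Rightarrow> 'a chain" where
  "Dmw n lam m = (\<lambda>q. \<Sum>w\<in>Sh m. (-1) ^ inv w * fw n lam w q)"

end

theory Submission
  imports Defs
begin


abbreviation S0 :: "nat set" where "S0 \<equiv> {1,2,5}"

lemma all_nat_split: "(\<forall>i::nat. P i) \<longleftrightarrow> P 0 \<and> (\<forall>i. P (Suc i))"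
  by (metis nat.exhaust)

lemma regular_Nil[simp]: "regular []" and regular_single[simp]: "regular [x]"
  by (auto simp: regular_def)

lemma regular_Cons2[simp]: "regular (x # y # p) \<longleftrightarrow> x \<noteq> y \<and> regular (y # p)"
  unfolding regular_def by (subst all_nat_split) auto

lemma allowed_single[simp]: "allowed n S [x] \<longleftrightarrow> x < n"
  by (auto simp: allowed_def)

lemma allowed_Cons2[simp]: "allowed n S (x # y # p) \<longleftrightarrow>
   x < n \<and> x \<noteq> y \<and> (\<exists>s\<in>S. y = (x + s) mod n) \<and> allowed n S (y # p)"
  unfolding allowed_def regular_Cons2
  apply (subst all_nat_split)
  apply auto
  done

lemma walk_length[simp]: "length (walk n a w) = Suc (length w)"
  by (induction w arbitrary: a) auto

lemma walk_hd: "\<exists>t. walk n a w = a # t"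
  by (cases w) auto

lemma walk_nonempty[simp]: "walk n a w \<noteq> []"
  by (cases w) auto

lemma walk_nonempty'[simp]: "[] \<noteq> walk n a w"
  by (cases w) auto

lemma hd_walk[simp]: "hd (walk n a w) = a"
  by (cases w) auto

lemma mod_step_inj:
  fixes a s s' n :: nat
  assumes "a < n" "s < n" "s' < n" "(a + s) mod n = (a + s') mod n"
  shows "s = s'"
proof -
  have h: "(a + x) mod n = (if a + x < n then a + x else a + x - n)" if "x < n" for x
  proof (cases "a + x < n")
    case False
    then have "(a + x) mod n = (a + x - n) mod n" by (simp add: le_mod_geq)
    also have "\<dots> = a + x - n" using that assms(1) False by simp
    finally show ?thesis using False by simp
  qed simp
  show ?thesis using h[OF assms(2)] h[OF assms(3)] assms by (auto split: if_splits)
qed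

lemma walk_inj:
  assumes "walk n a w = walk n a' w'" "\<forall>x\<in>set w. x < n" "\<forall>x\<in>set w'. x < n" "a < n"
  shows "a = a' \<and> w = w'"
  using assms
proof (induction w arbitrary: a a' w')
  case Nil
  then show ?case by (cases w') auto
next
  case (Cons s w)
  then show ?case
  proof (cases w')
    case Nil
    then show ?thesis using Cons.prems by (cases w) auto
  next
    case (Cons s' w'')
    with Cons.prems have e: "a = a'" "walk n ((a + s) mod n) w = walk n ((a' + s') mod n) w''" by auto
    have n0: "n > 0" using Cons.prems by auto
    from Cons.IH[OF e(2)] Cons.prems Cons n0 have "(a + s) mod n = (a' + s') mod n" "w = w''" by auto
    then have "s = s'" using mod_step_inj[of a n s s'] Cons.prems Cons e(1) by auto
    then show ?thesis using e \<open>w = w''\<close> Cons by auto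
  qed
qed

lemma walk_set: "n > 0 \<Longrightarrow> a < n \<Longrightarrow> set (walk n a w) \<subseteq> {..<n}"
  by (induction w arbitrary: a) auto

lemma mod_add_ne:
  fixes a s n :: nat
  assumes "a < n" "0 < s" "s < n"
  shows "(a + s) mod n \<noteq> a"
proof
  assume "(a + s) mod n = a"
  then have "(a + s) mod n = (a + 0) mod n" using assms by simp
  then show False using mod_step_inj[of a n s 0] assms by auto
qed

lemma allowed_walk:
  assumes "a < n" "set w \<subseteq> S" "\<forall>s\<in>S. 0 < s \<and> s < n"
  shows "allowed n S (walk n a w)"
  using assms
proof (induction w arbitrary: a)
  case Nil
  then show ?case by simp
next
  case (Cons s w)
  have n0: "n > 0" using Cons by auto
  obtain t where t: "walk n ((a + s) mod n) w = (a + s) mod n # t" using walk_hd by blast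
  have "allowed n S (walk n ((a + s) mod n) w)"
    using Cons n0 by auto
  moreover have "(a + s) mod n \<noteq> a" using mod_add_ne[of a n s] Cons by auto
  ultimately show ?case using Cons t by auto
qed

lemma allowed_walk_rev:
  assumes "allowed n S (walk n a v)" "a < n" "\<forall>x\<in>set v. x < n" "\<forall>s\<in>S. s < n"
  shows "set v \<subseteq> S"
  using assms
proof (induction v arbitrary: a)
  case Nil
  then show ?case by simp
next
  case (Cons s v)
  obtain t where t: "walk n ((a + s) mod n) v = (a + s) mod n # t" using walk_hd by blast
  from Cons.prems t obtain s' where s': "s' \<in> S" "(a + s) mod n = (a + s') mod n"
    and al: "allowed n S (walk n ((a + s) mod n) v)" by auto
  have n0: "n > 0" using Cons.prems by auto
  have "s = s'" using mod_step_inj[of a n s s'] s' Cons.prems by auto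
  moreover have "set v \<subseteq> S" using Cons.IH[OF al] Cons.prems n0 by auto
  ultimately show ?case using s' by auto
qed

lemma allowed_is_walk:
  assumes "allowed n S p" "p \<noteq> []"
  shows "\<exists>w. set w \<subseteq> S \<and> length w = length p - 1 \<and> p = walk n (hd p) w \<and> hd p < n"
  using assms
proof (induction p)
  case Nil
  then show ?case by simp
next
  case (Cons x p)
  show ?case
  proof (cases p)
    case Nil
    then show ?thesis using Cons by (auto intro: exI[of _ "[]"])
  next
    case (Cons y p')
    with Cons.prems obtain s where s: "s \<in> S" "y = (x + s) mod n" "x < n" and al: "allowed n S p" by auto
    from Cons.IH[OF al] Cons obtain w where w: "set w \<subseteq> S" "length w = length p - 1" "p = walk n y w" by auto
    show ?thesis
      apply (rule exI[of _ "s # w"])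
      using s w Cons by auto
  qed
qed


definition Wd :: "nat \<Rightarrow> nat list set" where
  "Wd m = {w. set w \<subseteq> S0 \<and> length w = m}"

lemma finite_Wd[simp]: "finite (Wd m)"
  unfolding Wd_def by (rule finite_lists_length_eq) simp

lemma S0_bounds: "n > 10 \<Longrightarrow> x \<in> S0 \<Longrightarrow> 0 < x \<and> x < n"
  by auto

lemma set_S0_lt: "n > 10 \<Longrightarrow> set w \<subseteq> S0 \<Longrightarrow> \<forall>x\<in>set w. x < n"
  by auto

fun face :: "nat \<Rightarrow> 'b list \<Rightarrow> 'b list" where
  "face _ [] = []"
| "face 0 (x # p) = p"
| "face (Suc j) (x # p) = x # face j p"

lemma take_drop_face: "take j p @ drop (Suc j) p = face j p"
proof (induction p arbitrary: j)
  case Nil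
  then show ?case by simp
next
  case (Cons x p)
  then show ?case by (cases j) auto
qed

lemma face0_walk: "face 0 (walk n a (s # w)) = walk n ((a + s) mod n) w"
  by simp

lemma face_mid_walk:
  "face (Suc (length pre)) (walk n a (pre @ s # s' # suf)) = walk n a (pre @ (s + s') # suf)"
proof (induction pre arbitrary: a)
  case Nil
  obtain t where t: "walk n ((a + s) mod n) (s' # suf) = (a + s) mod n # t" using walk_hd by blast
  then have "t = walk n (((a + s) mod n + s') mod n) suf" by simp
  then show ?case using t by (simp add: mod_add_left_eq add.assoc)
next
  case (Cons x pre)
  then show ?case by simp
qed

lemma face_end_walk: "w \<noteq> [] \<Longrightarrow> face (length w) (walk n a w) = walk n a (butlast w)"
proof (induction w arbitrary: a)
  case Nil
  then show ?case by simp
next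
  case (Cons s w)
  show ?case
  proof (cases w)
    case Nil
    then show ?thesis by simp
  next
    case (Cons s' w')
    then show ?thesis using Cons.IH[of "(a + s) mod n"] by simp
  qed
qed

lemma walk_shift: "n > 0 \<Longrightarrow> map (\<lambda>v. (v + k) mod n) (walk n b w) = walk n ((b + k) mod n) w"
proof (induction w arbitrary: b)
  case Nil
  then show ?case by simp
next
  case (Cons s w)
  have "((b + s) mod n + k) mod n = ((b + k) mod n + s) mod n"
  proof -
    have "((b + s) mod n + k) mod n = (b + s + k) mod n" by (simp add: mod_add_left_eq)
    moreover have "((b + k) mod n + s) mod n = (b + k + s) mod n" by (simp add: mod_add_left_eq)
    ultimately show ?thesis by (simp add: ac_simps)
  qed
  then show ?case using Cons by simp
qed

lemma walk_shift_m1: "n > 0 \<Longrightarrow> map (\<lambda>v. (v + n - 1) mod n) (walk n b w) = walk n ((b + n - 1) mod n) w"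
  using walk_shift[of n "n - 1" b w] by simp

lemma split_at2: "Suc k < length w \<Longrightarrow> \<exists>pre s s' suf. w = pre @ s # s' # suf \<and> length pre = k"
proof -
  assume a: "Suc k < length w"
  have "drop k w = w ! k # drop (Suc k) w" using a by (simp add: Cons_nth_drop_Suc)
  moreover have "drop (Suc k) w = w ! Suc k # drop (Suc (Suc k)) w" using a by (simp add: Cons_nth_drop_Suc)
  ultimately have "w = take k w @ w ! k # w ! Suc k # drop (Suc (Suc k)) w"
    by (metis append_take_drop_id)
  then show ?thesis using a by (intro exI[of _ "take k w"]) auto
qed

lemma append_S0_unique:
  assumes "pre' @ x # suf' = pre @ t # suf" "set pre' \<subseteq> A" "set suf' \<subseteq> A" "t \<notin> A"
  shows "pre' = pre \<and> x = t \<and> suf' = suf"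
proof -
  from assms(1) obtain us where
    "(pre' = pre @ us \<and> us @ x # suf' = t # suf) \<or> (pre' @ us = pre \<and> x # suf' = us @ t # suf)"
    by (auto simp: append_eq_append_conv2)
  then show ?thesis
  proof
    assume h: "pre' = pre @ us \<and> us @ x # suf' = t # suf"
    show ?thesis
    proof (cases us)
      case Nil then show ?thesis using h by auto
    next
      case (Cons y us') then show ?thesis using h assms(2,4) by auto
    qed
  next
    assume h: "pre' @ us = pre \<and> x # suf' = us @ t # suf"
    show ?thesis
    proof (cases us)
      case Nil then show ?thesis using h by auto
    next
      case (Cons y us') then show ?thesis using h assms(3,4) by auto
    qed
  qed
qed


lemma fw_walk:
  assumes "n > 10" "a < n" "set w \<subseteq> S0" "set w' \<subseteq> S0"
  shows "fw n lam w' (walk n a w) = (if w' = w then inverse lam ^ a else 0)"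
proof -
  have "walk n a w = walk n b w' \<longleftrightarrow> b = a \<and> w' = w" if "b < n" for b
  proof
    assume "walk n a w = walk n b w'"
    moreover have "\<forall>x\<in>set w. x < n" "\<forall>x\<in>set w'. x < n" using assms set_S0_lt by blast+
    ultimately have "a = b \<and> w = w'" using walk_inj[of n a w b w'] assms(2) by blast
    then show "b = a \<and> w' = w" by simp
  qed auto
  then have "fw n lam w' (walk n a w) = (\<Sum>b<n. if b = a \<and> w' = w then inverse lam ^ b else 0)"
    unfolding fw_def by (intro sum.cong) auto
  also have "\<dots> = (if w' = w then inverse lam ^ a else 0)"
    using assms(2) by (simp add: sum.delta)
  finally show ?thesis .
qed

lemma fw_zero: "(\<forall>a<n. q \<noteq> walk n a w) \<Longrightarrow> fw n lam w q = 0"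
  unfolding fw_def by (intro sum.neutral) auto

lemma fw_nonzero: "fw n lam w q \<noteq> 0 \<Longrightarrow> \<exists>a<n. q = walk n a w"
  using fw_zero by blast

lemma lam_nz: "lam ^ n = (1::'a::field) \<Longrightarrow> n > 0 \<Longrightarrow> lam \<noteq> 0"
  by (cases n) auto


lemma fw_tau:
  fixes lam :: "'a::field"
  assumes n: "n > 10" and l: "lam ^ n = 1" and w: "set w \<subseteq> S0"
  shows "(if set q \<subseteq> {..<n} then fw n lam w (map (\<lambda>v. (v + n - 1) mod n) q) else 0) = lam * fw n lam w q"
proof (cases "\<exists>a<n. q = walk n a w")
  case True
  then obtain a where a: "a < n" "q = walk n a w" by blast
  have sq: "set q \<subseteq> {..<n}" using walk_set[of n a w] a n by auto
  have mq: "map (\<lambda>v. (v + n - 1) mod n) q = walk n ((a + n - 1) mod n) w"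
    using walk_shift_m1 a n by auto
  have lnz: "lam \<noteq> 0" using lam_nz[OF l] n by auto
  have key: "inverse lam ^ ((a + n - 1) mod n) = lam * inverse lam ^ a"
  proof (cases a)
    case 0
    then have e: "(a + n - 1) mod n = n - 1" using n by simp
    have "lam ^ (n - 1) * lam = 1" using power_minus_mult[of n lam] l n by simp
    then have "inverse lam ^ (n - 1) = lam" by (metis inverse_unique power_inverse)
    then show ?thesis using e 0 by simp
  next
    case (Suc b)
    then have e: "(a + n - 1) mod n = b" using a by simp
    have "inverse lam ^ a = inverse lam ^ b * inverse lam" using Suc by (simp add: power_Suc2)
    then show ?thesis using e lnz by (simp add: field_simps)
  qed
  have "(a + n - 1) mod n < n" using n by simp
  then have "fw n lam w (walk n ((a + n - 1) mod n) w) = inverse lam ^ ((a + n - 1) mod n)"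
    using fw_walk[OF n _ w w] by simp
  moreover have "fw n lam w q = inverse lam ^ a" using fw_walk[OF n a(1) w w] a(2) by simp
  ultimately show ?thesis using sq mq key by simp
next
  case False
  have "fw n lam w (map (\<lambda>v. (v + n - 1) mod n) q) = 0" if sq: "set q \<subseteq> {..<n}"
  proof (rule fw_zero, intro allI impI notI)
    fix b assume b: "b < n" "map (\<lambda>v. (v + n - 1) mod n) q = walk n b w"
    have "map (\<lambda>v. (v + 1) mod n) (map (\<lambda>v. (v + n - 1) mod n) q) = q"
    proof -
      have "((v + n - 1) mod n + 1) mod n = v" if "v < n" for v
      proof -
        have "((v + n - 1) mod n + 1) mod n = (v + n - 1 + 1) mod n" by (rule mod_add_left_eq)
        also have "\<dots> = (v + n) mod n" using n by simp
        also have "\<dots> = v" using that by simp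
        finally show ?thesis .
      qed
      then show ?thesis using sq by (auto intro!: map_idI)
    qed
    then have "q = map (\<lambda>v. (v + 1) mod n) (walk n b w)" using b(2) by metis
    then have "q = walk n ((b + 1) mod n) w" using walk_shift[of n 1 b w] n by simp
    moreover have "(b + 1) mod n < n" using n by simp
    ultimately show False using False by blast
  qed
  then show ?thesis using fw_zero False by auto
qed


definition Esp :: "nat \<Rightarrow> nat \<Rightarrow> 'a::field \<Rightarrow> 'a chain set" where
  "Esp n m lam = {u \<in> A_space n S0 m. tau n u = chain_scale lam u}"

lemma R1:
  assumes "n > 10" "u \<in> A_space n S0 m" "u p \<noteq> 0"
  shows "\<exists>a<n. \<exists>w\<in>Wd m. p = walk n a w"
proof -
  have p: "length p = Suc m" "allowed n S0 p" using assms unfolding A_space_def by auto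
  then have "p \<noteq> []" by auto
  from allowed_is_walk[OF p(2) this] obtain w where
    "set w \<subseteq> S0" "length w = length p - 1" "p = walk n (hd p) w" "hd p < n" by blast
  then show ?thesis using p(1) unfolding Wd_def by auto
qed

lemma R2:
  fixes lam :: "'a::field"
  assumes n: "n > 10" and l: "lam ^ n = 1" and u: "u \<in> Esp n m lam" and w: "w \<in> Wd m"
  shows "a < n \<Longrightarrow> u (walk n a w) = inverse lam ^ a * u (walk n 0 w)"
proof (induction a)
  case 0
  then show ?case by simp
next
  case (Suc a)
  have lnz: "lam \<noteq> 0" using lam_nz[OF l] n by auto
  have eig: "tau n u (walk n (Suc a) w) = lam * u (walk n (Suc a) w)"
  proof -
    have "tau n u = chain_scale lam u" using u unfolding Esp_def by blast
    then show ?thesis unfolding chain_scale_def by (rule fun_cong)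
  qed
  have sq: "set (walk n (Suc a) w) \<subseteq> {..<n}" using walk_set[of n "Suc a" w] Suc n by auto
  have "(Suc a + n - 1) mod n = a" using Suc by simp
  then have "tau n u (walk n (Suc a) w) = u (walk n a w)"
    using sq walk_shift_m1[of n "Suc a" w] n unfolding tau_def by simp
  then have "u (walk n (Suc a) w) = inverse lam * u (walk n a w)"
    using eig lnz by (simp add: field_simps)
  then show ?case using Suc by simp
qed

lemma Det:
  fixes lam :: "'a::field"
  assumes n: "n > 10" and l: "lam ^ n = 1" and u: "u \<in> Esp n m lam" and v: "v \<in> Esp n m lam"
    and eq: "\<forall>w\<in>Wd m. u (walk n 0 w) = v (walk n 0 w)"
  shows "u = v"
proof
  fix p
  show "u p = v p"
  proof (cases "\<exists>a<n. \<exists>w\<in>Wd m. p = walk n a w")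
    case True
    then obtain a w where aw: "a < n" "w \<in> Wd m" "p = walk n a w" by blast
    have "u p = inverse lam ^ a * u (walk n 0 w)" using R2[OF n l u aw(2) aw(1)] aw(3) by simp
    moreover have "v p = inverse lam ^ a * v (walk n 0 w)" using R2[OF n l v aw(2) aw(1)] aw(3) by simp
    ultimately show ?thesis using eq aw(2) by simp
  next
    case False
    have "u \<in> A_space n S0 m" "v \<in> A_space n S0 m" using u v unfolding Esp_def by auto
    then have "u p = 0" "v p = 0" using R1[OF n, of _ m p] False by metis+
    then show ?thesis by simp
  qed
qed

lemma comb_in_E:
  fixes lam :: "'a::field"
  assumes n: "n > 10" and l: "lam ^ n = 1" and I: "finite I" and ws: "\<forall>i\<in>I. ws i \<in> Wd m"
  shows "(\<lambda>q. \<Sum>i\<in>I. k i * fw n lam (ws i) q) \<in> Esp n m lam"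
  unfolding Esp_def
proof (intro CollectI conjI)
  show "(\<lambda>q. \<Sum>i\<in>I. k i * fw n lam (ws i) q) \<in> A_space n S0 m"
    unfolding A_space_def
  proof (intro CollectI allI impI)
    fix p assume "(\<Sum>i\<in>I. k i * fw n lam (ws i) p) \<noteq> 0"
    then obtain i where i: "i \<in> I" "fw n lam (ws i) p \<noteq> 0"
      by (metis (mono_tags, lifting) mult_zero_right sum.neutral)
    then obtain a where a: "a < n" "p = walk n a (ws i)" using fw_nonzero by blast
    have "ws i \<in> Wd m" using ws i by auto
    then show "length p = Suc m \<and> allowed n S0 p"
      using a allowed_walk[of a n "ws i" S0] n unfolding Wd_def by auto
  qed
  show "tau n (\<lambda>q. \<Sum>i\<in>I. k i * fw n lam (ws i) q) = chain_scale lam (\<lambda>q. \<Sum>i\<in>I. k i * fw n lam (ws i) q)"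
  proof
    fix q
    have "tau n (\<lambda>q. \<Sum>i\<in>I. k i * fw n lam (ws i) q) q =
       (\<Sum>i\<in>I. k i * (if set q \<subseteq> {..<n} then fw n lam (ws i) (map (\<lambda>v. (v + n - 1) mod n) q) else 0))"
      unfolding tau_def by auto
    also have "\<dots> = (\<Sum>i\<in>I. k i * (lam * fw n lam (ws i) q))"
      using fw_tau[OF n l] ws unfolding Wd_def by (intro sum.cong) auto
    also have "\<dots> = chain_scale lam (\<lambda>q. \<Sum>i\<in>I. k i * fw n lam (ws i) q) q"
      unfolding chain_scale_def by (simp add: sum_distrib_left ac_simps)
    finally show "tau n (\<lambda>q. \<Sum>i\<in>I. k i * fw n lam (ws i) q) q = chain_scale lam (\<lambda>q. \<Sum>i\<in>I. k i * fw n lam (ws i) q) q" .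
  qed
qed

lemma comb_eval:
  fixes lam :: "'a::field"
  assumes n: "n > 10" and ws: "\<forall>i\<in>I. set (ws i) \<subseteq> S0" and w: "set w \<subseteq> S0"
  shows "(\<lambda>q. \<Sum>i\<in>I. k i * fw n lam (ws i) q) (walk n 0 w) = (\<Sum>i\<in>I. if ws i = w then k i else 0)"
proof (intro sum.cong refl)
  fix i assume "i \<in> I"
  then have "fw n lam (ws i) (walk n 0 w) = (if ws i = w then inverse lam ^ 0 else 0)"
    using fw_walk[OF n _ w, of 0 "ws i" lam] ws n by auto
  then show "k i * fw n lam (ws i) (walk n 0 w) = (if ws i = w then k i else 0)" by simp
qed

lemma A_space_add: "u \<in> A_space n S m \<Longrightarrow> v \<in> A_space n S m \<Longrightarrow> u + v \<in> A_space n S m"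
  unfolding A_space_def by (auto simp: plus_fun_def) (metis add.right_neutral)+
lemma A_space_scale: "u \<in> A_space n S m \<Longrightarrow> chain_scale c u \<in> A_space n S m"
  unfolding A_space_def chain_scale_def by auto
lemma A_space_zero: "0 \<in> A_space n S m"
  unfolding A_space_def by auto

lemma tau_add: "tau n (u + v) = tau n u + tau n v"
  unfolding tau_def by auto
lemma tau_scale: "tau n (chain_scale c u) = chain_scale c (tau n u)"
  unfolding tau_def chain_scale_def by auto

lemma Esp_add: "u \<in> Esp n m lam \<Longrightarrow> v \<in> Esp n m lam \<Longrightarrow> u + v \<in> Esp n m lam"
  unfolding Esp_def using A_space_add[of u n S0 m v] tau_add[of n u v]
  by (auto simp: chain_scale_def fun_eq_iff algebra_simps)
lemma Esp_scale: "u \<in> Esp n m lam \<Longrightarrow> chain_scale c u \<in> Esp n m lam"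
  unfolding Esp_def using A_space_scale[of u n S0 m c] tau_scale[of n c u]
  by (auto simp: chain_scale_def fun_eq_iff algebra_simps)
lemma Esp_zero: "0 \<in> Esp n m lam"
  unfolding Esp_def using A_space_zero by (auto simp: tau_def chain_scale_def fun_eq_iff)


abbreviation T0 :: "nat set" where "T0 \<equiv> {3,4,6,7,10}"

definition Qd :: "nat list \<Rightarrow> nat list \<Rightarrow> nat \<Rightarrow> nat list \<Rightarrow> bool" where
  "Qd pre suf t w \<longleftrightarrow> (\<exists>s s'. s \<in> S0 \<and> s' \<in> S0 \<and> s + s' = t \<and> w = pre @ s # s' # suf)"

lemma regular_walk:
  assumes "a < n" "\<forall>x\<in>set w. 0 < x \<and> x < n"
  shows "regular (walk n a w)"
  using allowed_walk[of a n w "set w"] assms unfolding allowed_def by auto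

lemma length_face: "j < length p \<Longrightarrow> length (face j p) = length p - 1"
proof (induction p arbitrary: j)
  case Nil
  then show ?case by simp
next
  case (Cons x p)
  then show ?case by (cases j) auto
qed

lemma finite_paths: "finite (paths n m)"
proof -
  have "paths n m \<subseteq> {xs. set xs \<subseteq> {..<n} \<and> length xs = Suc m}" unfolding paths_def by auto
  moreover have "finite {xs. set xs \<subseteq> {..<n} \<and> length xs = Suc m}"
    by (rule finite_lists_length_eq) simp
  ultimately show ?thesis by (rule finite_subset)
qed

lemma Wd_lt: "n > 10 \<Longrightarrow> w \<in> Wd m \<Longrightarrow> \<forall>x\<in>set w. x < n"
  unfolding Wd_def by auto

lemma BF:
  fixes lam :: "'a::field"
  assumes n: "n > 10" and l: "lam ^ n = 1" and u: "u \<in> Esp n m lam" and q: "regular q"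
  shows "boundary n m u q = (\<Sum>a<n. \<Sum>w\<in>Wd m. \<Sum>j\<in>{..m}.
            if face j (walk n a w) = q then (-1) ^ j * (inverse lam ^ a * u (walk n 0 w)) else 0)"
proof -
  define G where "G p = (\<Sum>j\<in>{..m}. if face j p = q then (-1) ^ j * u p else 0)" for p
  have b: "boundary n m u q = (\<Sum>p\<in>paths n m. G p)"
    unfolding boundary_def G_def using q by (simp add: take_drop_face)
  define h where "h = (\<lambda>(a::nat, w::nat list). walk n a w)"
  define Img where "Img = h ` ({..<n} \<times> Wd m)"
  have uA: "u \<in> A_space n S0 m" using u unfolding Esp_def by auto
  have sub: "Img \<subseteq> paths n m"
  proof
    fix p assume "p \<in> Img"
    then obtain a w where aw: "a < n" "w \<in> Wd m" "p = walk n a w" unfolding Img_def h_def by auto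
    have "allowed n S0 p" using allowed_walk[of a n w S0] aw n unfolding Wd_def by auto
    then show "p \<in> paths n m" using aw walk_set[of n a w] n unfolding paths_def allowed_def Wd_def by auto
  qed
  have z: "\<forall>p\<in>paths n m - Img. G p = 0"
  proof
    fix p assume p: "p \<in> paths n m - Img"
    have "u p = 0"
    proof (rule ccontr)
      assume "u p \<noteq> 0"
      then obtain a w where "a < n" "w \<in> Wd m" "p = walk n a w" using R1[OF n uA] by blast
      then have "p \<in> Img" unfolding Img_def h_def by force
      then show False using p by auto
    qed
    then show "G p = 0" unfolding G_def by (intro sum.neutral) simp
  qed
  have "(\<Sum>p\<in>paths n m. G p) = (\<Sum>p\<in>Img. G p)"
    using sum.mono_neutral_right[OF finite_paths sub z] .
  also have "\<dots> = (\<Sum>x\<in>{..<n} \<times> Wd m. G (h x))"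
  proof -
    have "inj_on h ({..<n} \<times> Wd m)"
    proof (rule inj_onI)
      fix x y assume x: "x \<in> {..<n} \<times> Wd m" and y: "y \<in> {..<n} \<times> Wd m" and e: "h x = h y"
      obtain a w where "x = (a, w)" by force
      moreover obtain b v where "y = (b, v)" by force
      ultimately show "x = y" using walk_inj[of n a w b v] e x y Wd_lt[OF n] unfolding h_def by auto
    qed
    then show ?thesis unfolding Img_def by (simp add: sum.reindex)
  qed
  also have "\<dots> = (\<Sum>(a, w)\<in>{..<n} \<times> Wd m. G (walk n a w))"
    by (rule sum.cong) (auto simp: h_def)
  also have "\<dots> = (\<Sum>a<n. \<Sum>w\<in>Wd m. G (walk n a w))"
    by (rule sum.cartesian_product[symmetric])
  also have "\<dots> = (\<Sum>a<n. \<Sum>w\<in>Wd m. \<Sum>j\<in>{..m}.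
            if face j (walk n a w) = q then (-1) ^ j * (inverse lam ^ a * u (walk n 0 w)) else 0)"
  proof (intro sum.cong refl)
    fix a w assume aw: "a \<in> {..<n}" "w \<in> Wd m"
    have e: "u (walk n a w) = inverse lam ^ a * u (walk n 0 w)" using R2[OF n l u aw(2), of a] aw(1) by simp
    show "G (walk n a w) = (\<Sum>j\<in>{..m}.
            if face j (walk n a w) = q then (-1) ^ j * (inverse lam ^ a * u (walk n 0 w)) else 0)"
      unfolding G_def e by (rule refl)
  qed
  finally show ?thesis using b by simp
qed

lemma Char:
  assumes n: "n > 10" and a: "a < n" and w: "w \<in> Wd m" and j: "j \<le> m" and a0: "a0 < n"
    and pre: "set pre \<subseteq> S0" and suf: "set suf \<subseteq> S0" and t: "t \<in> T0"
  shows "face j (walk n a w) = walk n a0 (pre @ t # suf) \<longleftrightarrow>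
         (a = a0 \<and> j = Suc (length pre) \<and> Qd pre suf t w)"
proof
  assume e: "face j (walk n a w) = walk n a0 (pre @ t # suf)"
  have lw: "length w = m" "set w \<subseteq> S0" using w unfolding Wd_def by auto
  have tl: "\<forall>x\<in>set (pre @ t # suf). x < n" using pre suf t n by auto
  have tS: "t \<notin> S0" using t by auto
  show "a = a0 \<and> j = Suc (length pre) \<and> Qd pre suf t w"
  proof (cases "j = 0")
    case True
    show ?thesis
    proof (cases w)
      case Nil
      then show ?thesis using e True by simp
    next
      case (Cons s w')
      then have "walk n ((a + s) mod n) w' = walk n a0 (pre @ t # suf)" using e True by simp
      moreover have "\<forall>x\<in>set w'. x < n" using lw Cons n by auto
      moreover have "(a + s) mod n < n" using n by simp
      ultimately have "w' = pre @ t # suf" using walk_inj[of n "(a + s) mod n" w' a0 "pre @ t # suf"] tl by simp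
      then show ?thesis using lw Cons tS by auto
    qed
  next
    case False
    show ?thesis
    proof (cases "j = m")
      case True
      then have "w \<noteq> []" using False lw by auto
      have jm: "j = length w" using True lw by simp
      have "walk n a (butlast w) = walk n a0 (pre @ t # suf)"
        using e face_end_walk[OF \<open>w \<noteq> []\<close>, of n a] unfolding jm by simp
      moreover have "\<forall>x\<in>set (butlast w). x < n" using lw n by (auto dest: in_set_butlastD)
      ultimately have "butlast w = pre @ t # suf" using walk_inj[of n a "butlast w" a0 "pre @ t # suf"] tl a by simp
      then have "t \<in> set w" by (metis in_set_butlastD in_set_conv_decomp)
      then show ?thesis using lw tS by auto
    next
      case False2: False
      then have "Suc (j - 1) < length w" using False j lw by auto
      from split_at2[OF this] obtain pre' s s' suf' where
        sp: "w = pre' @ s # s' # suf'" "length pre' = j - 1" by blast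
      have jj: "j = Suc (length pre')" using sp False by simp
      have "face j (walk n a w) = walk n a (pre' @ (s + s') # suf')" using face_mid_walk sp jj by simp
      then have e2: "walk n a (pre' @ (s + s') # suf') = walk n a0 (pre @ t # suf)" using e by simp
      have ss: "s \<in> S0" "s' \<in> S0" "set pre' \<subseteq> S0" "set suf' \<subseteq> S0" using lw sp by auto
      have "\<forall>x\<in>set (pre' @ (s + s') # suf'). x < n" using ss n by auto
      then have "a = a0" "pre' @ (s + s') # suf' = pre @ t # suf"
        using walk_inj[OF e2 _ tl a] by auto
      moreover have "pre' = pre \<and> s + s' = t \<and> suf' = suf"
        using append_S0_unique[OF calculation(2) ss(3) ss(4) tS] .
      ultimately show ?thesis using sp jj ss unfolding Qd_def by auto
    qed
  qed
next
  assume "a = a0 \<and> j = Suc (length pre) \<and> Qd pre suf t w"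
  then show "face j (walk n a w) = walk n a0 (pre @ t # suf)"
    unfolding Qd_def using face_mid_walk by auto
qed


definition Rel :: "nat \<Rightarrow> (nat list \<Rightarrow> 'a::field) \<Rightarrow> bool" where
  "Rel m c \<longleftrightarrow> (\<forall>pre suf t. set pre \<subseteq> S0 \<longrightarrow> set suf \<subseteq> S0 \<longrightarrow> length pre + length suf + 2 = m \<longrightarrow>
      t \<in> T0 \<longrightarrow> (\<Sum>w\<in>Wd m. if Qd pre suf t w then c w else 0) = 0)"

lemma Collapse:
  fixes lam :: "'a::field"
  assumes n: "n > 10" and l: "lam ^ n = 1" and u: "u \<in> Esp n m lam" and a0: "a0 < n"
    and pre: "set pre \<subseteq> S0" and suf: "set suf \<subseteq> S0" and t: "t \<in> T0"
    and len: "length pre + length suf + 2 = m"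
  shows "boundary n m u (walk n a0 (pre @ t # suf)) =
    (-1) ^ Suc (length pre) * inverse lam ^ a0 * (\<Sum>w\<in>Wd m. if Qd pre suf t w then u (walk n 0 w) else 0)"
proof -
  define q where "q = walk n a0 (pre @ t # suf)"
  define k where "k = length pre"
  define F where "F a w j = (-1) ^ j * (inverse lam ^ a * u (walk n 0 w))" for a w j
  have "\<forall>x\<in>set (pre @ t # suf). 0 < x \<and> x < n" using pre suf t n by auto
  then have rq: "regular q" unfolding q_def using regular_walk[OF a0] by blast
  have km: "Suc k \<le> m" using len unfolding k_def by simp
  have inner: "(\<Sum>j\<in>{..m}. if face j (walk n a w) = q then F a w j else 0) =
      (if a = a0 \<and> Qd pre suf t w then F a w (Suc k) else 0)" if a: "a < n" and w: "w \<in> Wd m" for a w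
  proof -
    have "(\<Sum>j\<in>{..m}. if face j (walk n a w) = q then F a w j else 0) =
      (\<Sum>j\<in>{..m}. if j = Suc k then (if a = a0 \<and> Qd pre suf t w then F a w j else 0) else 0)"
    proof (intro sum.cong refl)
      fix j assume "j \<in> {..m}"
      then have "j \<le> m" by simp
      from Char[OF n a w this a0 pre suf t]
      show "(if face j (walk n a w) = q then F a w j else 0) =
        (if j = Suc k then (if a = a0 \<and> Qd pre suf t w then F a w j else 0) else 0)"
        unfolding q_def k_def by auto
    qed
    also have "\<dots> = (if a = a0 \<and> Qd pre suf t w then F a w (Suc k) else 0)"
      using km by (simp add: sum.delta)
    finally show ?thesis .
  qed
  have "boundary n m u q = (\<Sum>a<n. \<Sum>w\<in>Wd m. \<Sum>j\<in>{..m}. if face j (walk n a w) = q then F a w j else 0)"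
    unfolding F_def using BF[OF n l u rq] .
  also have "\<dots> = (\<Sum>a<n. \<Sum>w\<in>Wd m. if a = a0 \<and> Qd pre suf t w then F a w (Suc k) else 0)"
    using inner by (intro sum.cong refl) auto
  also have "\<dots> = (\<Sum>a<n. if a = a0 then (\<Sum>w\<in>Wd m. if Qd pre suf t w then F a0 w (Suc k) else 0) else 0)"
    by (intro sum.cong refl) auto
  also have "\<dots> = (\<Sum>w\<in>Wd m. if Qd pre suf t w then F a0 w (Suc k) else 0)"
    using a0 by (simp add: sum.delta)
  also have "\<dots> = (\<Sum>w\<in>Wd m. (-1) ^ Suc k * inverse lam ^ a0 * (if Qd pre suf t w then u (walk n 0 w) else 0))"
    unfolding F_def by (intro sum.cong refl) auto
  also have "\<dots> = (-1) ^ Suc k * inverse lam ^ a0 * (\<Sum>w\<in>Wd m. if Qd pre suf t w then u (walk n 0 w) else 0)"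
    by (simp add: sum_distrib_left)
  finally show ?thesis unfolding q_def k_def .
qed

lemma sum_nz: "sum g A \<noteq> 0 \<Longrightarrow> \<exists>a\<in>A. g a \<noteq> 0"
  using sum.not_neutral_contains_not_neutral by blast

lemma Omega_iff:
  fixes lam :: "'a::field"
  assumes n: "n > 10" and l: "lam ^ n = 1" and u: "u \<in> Esp n m lam" and m: "m \<ge> 2"
  shows "boundary n m u \<in> A_space n S0 (m - 1) \<longleftrightarrow> Rel m (\<lambda>w. u (walk n 0 w))"
proof
  assume bA: "boundary n m u \<in> A_space n S0 (m - 1)"
  show "Rel m (\<lambda>w. u (walk n 0 w))"
    unfolding Rel_def
  proof (intro allI impI)
    fix pre suf t
    assume pre: "set pre \<subseteq> S0" and suf: "set suf \<subseteq> S0" and len: "length pre + length suf + 2 = m"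
      and t: "t \<in> T0"
    have z: "boundary n m u (walk n 0 (pre @ t # suf)) = 0"
    proof (rule ccontr)
      assume "boundary n m u (walk n 0 (pre @ t # suf)) \<noteq> 0"
      then have al: "allowed n S0 (walk n 0 (pre @ t # suf))" using bA unfolding A_space_def by blast
      have lt: "\<forall>x\<in>set (pre @ t # suf). x < n" using pre suf t n by auto
      have sl: "\<forall>s\<in>S0. s < n" using n by auto
      have "set (pre @ t # suf) \<subseteq> S0" using allowed_walk_rev[OF al _ lt sl] n by simp
      then show False using t by auto
    qed
    have "0 < n" using n by simp
    from Collapse[OF n l u this pre suf t len] z
    show "(\<Sum>w\<in>Wd m. if Qd pre suf t w then u (walk n 0 w) else 0) = 0" by simp
  qed
next
  assume R: "Rel m (\<lambda>w. u (walk n 0 w))"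
  show "boundary n m u \<in> A_space n S0 (m - 1)"
    unfolding A_space_def
  proof (intro CollectI allI impI)
    fix q assume bq: "boundary n m u q \<noteq> 0"
    have rq: "regular q"
    proof (rule ccontr)
      assume "\<not> regular q"
      then have "boundary n m u q = 0" unfolding boundary_def by simp
      then show False using bq by simp
    qed
    from bq BF[OF n l u rq] obtain a w j where
      a: "a < n" and w: "w \<in> Wd m" and j: "j \<le> m" and fq: "face j (walk n a w) = q"
      by (auto dest!: sum_nz split: if_splits)
    have lw: "length w = m" "set w \<subseteq> S0" using w unfolding Wd_def by auto
    have lq: "length q = Suc (m - 1)"
      using length_face[of j "walk n a w"] fq j lw m by auto
    have Sb: "\<forall>s\<in>S0. 0 < s \<and> s < n" using n by auto
    have alq: "allowed n S0 q"
    proof (rule ccontr)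
      assume nal: "\<not> allowed n S0 q"
      show False
      proof (cases "j = 0")
        case True
        obtain s w' where sw: "w = s # w'" using lw m by (cases w) auto
        have "q = walk n ((a + s) mod n) w'" using fq True sw by simp
        moreover have "(a + s) mod n < n" using n by simp
        ultimately have "allowed n S0 q" using allowed_walk[of "(a + s) mod n" n w' S0] Sb lw sw by auto
        then show False using nal by simp
      next
        case False
        show False
        proof (cases "j = m")
          case True
          have wne: "w \<noteq> []" using lw m by auto
          have jm: "j = length w" using True lw by simp
          have "q = walk n a (butlast w)" using fq face_end_walk[OF wne, of n a] unfolding jm by simp
          moreover have "set (butlast w) \<subseteq> S0" using lw by (auto dest: in_set_butlastD)
          ultimately have "allowed n S0 q" using allowed_walk[of a n "butlast w" S0] Sb a by auto
          then show False using nal by simp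
        next
          case False2: False
          then have "Suc (j - 1) < length w" using False j lw by auto
          from split_at2[OF this] obtain pre s s' suf where
            sp: "w = pre @ s # s' # suf" "length pre = j - 1" by blast
          have jj: "j = Suc (length pre)" using sp False by simp
          have "face j (walk n a w) = walk n a (pre @ (s + s') # suf)" using face_mid_walk sp jj by simp
          then have qe: "q = walk n a (pre @ (s + s') # suf)" using fq by simp
          have ss: "s \<in> S0" "s' \<in> S0" "set pre \<subseteq> S0" "set suf \<subseteq> S0" using lw sp by auto
          show False
          proof (cases "s + s' \<in> S0")
            case True
            then have "allowed n S0 q" using qe allowed_walk[of a n "pre @ (s + s') # suf" S0] Sb a ss by auto
            then show False using nal by simp
          next
            case False
            then have t: "s + s' \<in> T0" using ss(1,2) by auto
            have len: "length pre + length suf + 2 = m" using sp lw by simp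
            have "(\<Sum>w\<in>Wd m. if Qd pre suf (s + s') w then u (walk n 0 w) else 0) = 0"
              using R ss(3,4) len t unfolding Rel_def by blast
            then have "boundary n m u q = 0"
              using Collapse[OF n l u a ss(3,4) t len] qe by simp
            then show False using bq by simp
          qed
        qed
      qed
    qed
    show "length q = Suc (m - 1) \<and> allowed n S0 q" using lq alq by simp
  qed
qed


lemma inv_set_Cons:
  "{(i, j). i < j \<and> j < length (x # w) \<and> (x # w) ! i > (x # w) ! j} =
   (\<lambda>j. (0, Suc j)) ` {j. j < length w \<and> w ! j < x} \<union>
   (\<lambda>(i, j). (Suc i, Suc j)) ` {(i, j). i < j \<and> j < length w \<and> w ! i > w ! j}"
  (is "?L = ?A \<union> ?B")
proof (intro equalityI subsetI)
  fix p assume p: "p \<in> ?L"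
  obtain i j where ij: "p = (i, j)" by force
  show "p \<in> ?A \<union> ?B"
  proof (cases i)
    case 0
    then obtain j' where "j = Suc j'" using p ij by (cases j) auto
    then show ?thesis using p ij 0 by auto
  next
    case (Suc i')
    then obtain j' where j': "j = Suc j'" using p ij by (cases j) auto
    then have mem: "(i', j') \<in> {(i, j). i < j \<and> j < length w \<and> w ! i > w ! j}" using p ij Suc by auto
    have eq: "p = (\<lambda>(i, j). (Suc i, Suc j)) (i', j')" using ij Suc j' by simp
    show ?thesis
      by (rule UnI2, rule image_eqI[where f="\<lambda>(i, j). (Suc i, Suc j)" and x="(i', j')", OF eq mem])
  qed
next
  fix p assume "p \<in> ?A \<union> ?B"
  then show "p \<in> ?L" by auto
qed

lemma inv_Cons: "inv (x # w) = length (filter (\<lambda>y. y < x) w) + inv w"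
proof -
  let ?A = "(\<lambda>j. (0::nat, Suc j)) ` {j. j < length w \<and> w ! j < x}"
  let ?P = "{(i, j). i < j \<and> j < length w \<and> w ! i > w ! j}"
  let ?B = "(\<lambda>(i, j). (Suc i, Suc j)) ` ?P"
  have fP: "finite ?P" by (rule finite_subset[of _ "{..<length w} \<times> {..<length w}"]) auto
  have cA: "card ?A = length (filter (\<lambda>y. y < x) w)"
    by (subst card_image) (auto simp: inj_on_def length_filter_conv_card)
  have cB: "card ?B = inv w"
    unfolding inv_def by (subst card_image) (auto simp: inj_on_def)
  have "inv (x # w) = card (?A \<union> ?B)" unfolding inv_def inv_set_Cons ..
  also have "\<dots> = card ?A + card ?B"
    by (rule card_Un_disjoint) (use fP in auto)
  finally show ?thesis using cA cB by simp
qed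

lemma inv_Nil[simp]: "inv [] = 0"
  unfolding inv_def by simp

lemma inv_sorted: "sorted w \<Longrightarrow> inv w = 0"
proof (induction w)
  case Nil
  then show ?case by simp
next
  case (Cons x w)
  then have "filter (\<lambda>y. y < x) w = []" by (auto simp: filter_empty_conv)
  then show ?case using Cons by (simp add: inv_Cons)
qed

lemma inv_swap:
  assumes "x \<noteq> y"
  shows "((-1)::'a::ring_1) ^ inv (pre @ x # y # suf) = - ((-1) ^ inv (pre @ y # x # suf))"
proof (induction pre)
  case Nil
  have "inv (x # y # suf) = (if y < x then 1 else 0) + length (filter (\<lambda>z. z < x) suf) + length (filter (\<lambda>z. z < y) suf) + inv suf"
    by (simp add: inv_Cons)
  moreover have "inv (y # x # suf) = (if x < y then 1 else 0) + length (filter (\<lambda>z. z < x) suf) + length (filter (\<lambda>z. z < y) suf) + inv suf"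
    by (simp add: inv_Cons)
  ultimately show ?case using assms by (auto simp: power_add)
next
  case (Cons a pre)
  have "length (filter (\<lambda>z. z < a) (pre @ x # y # suf)) = length (filter (\<lambda>z. z < a) (pre @ y # x # suf))"
    by simp
  then show ?case using Cons by (simp add: inv_Cons power_add)
qed

definition Hanti :: "(nat list \<Rightarrow> 'a::comm_ring_1) \<Rightarrow> bool" where
  "Hanti c \<longleftrightarrow> (\<forall>pre suf x y. x \<noteq> y \<longrightarrow> c (pre @ x # y # suf) = - c (pre @ y # x # suf))"

lemma Hanti_Cons: "Hanti c \<Longrightarrow> Hanti (\<lambda>z. c (a # z))"
  unfolding Hanti_def by (metis append_Cons)

lemma insort_sign:
  "sorted v \<Longrightarrow> Hanti c \<Longrightarrow> c (x # v) = (-1) ^ length (filter (\<lambda>y. y < x) v) * c (insort x v)"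
proof (induction v arbitrary: c)
  case Nil
  then show ?case by simp
next
  case (Cons y v)
  show ?case
  proof (cases "x \<le> y")
    case True
    then have "filter (\<lambda>z. z < x) (y # v) = []" using Cons.prems by (auto simp: filter_empty_conv)
    then show ?thesis using True by simp
  next
    case False
    have h: "c (x # y # v) = - c (y # x # v)"
      using Cons.prems(2) False unfolding Hanti_def by (metis append_Nil order_refl)
    have "c (y # x # v) = (-1) ^ length (filter (\<lambda>z. z < x) v) * c (y # insort x v)"
      using Cons.IH[of "\<lambda>z. c (y # z)"] Cons.prems Hanti_Cons by auto
    then show ?thesis using h False by simp
  qed
qed

lemma sort_sign: "Hanti c \<Longrightarrow> c w = (-1) ^ inv w * c (sort w)"
proof (induction w arbitrary: c)
  case Nil
  then show ?case by simp
next
  case (Cons x w)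
  have "c (x # w) = (-1) ^ inv w * c (x # sort w)"
    using Cons.IH[of "\<lambda>z. c (x # z)"] Hanti_Cons[OF Cons.prems] by simp
  also have "c (x # sort w) = (-1) ^ length (filter (\<lambda>y. y < x) (sort w)) * c (insort x (sort w))"
    using insort_sign[OF sorted_sort Cons.prems] .
  also have "length (filter (\<lambda>y. y < x) (sort w)) = length (filter (\<lambda>y. y < x) w)"
    by (metis mset_filter mset_sort size_mset)
  finally show ?case by (simp add: inv_Cons power_add mult_ac)
qed


definition MA :: "nat \<Rightarrow> nat multiset" where "MA m = replicate_mset m 1"
definition MB :: "nat \<Rightarrow> nat \<Rightarrow> nat multiset" where "MB s m = replicate_mset (m - 1) 1 + {#s#}"
definition MD :: "nat \<Rightarrow> nat multiset" where "MD m = replicate_mset (m - 2) 1 + {#2, 5#}"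

definition G :: "nat multiset \<Rightarrow> nat list \<Rightarrow> 'a::field" where
  "G M w = (if mset w = M then (-1) ^ inv w else 0)"

lemma G_ne: "count (mset w) a \<noteq> count M a \<Longrightarrow> G M w = 0"
  unfolding G_def by auto

lemma G_eq: "mset w = M \<Longrightarrow> G M w = (-1) ^ inv w"
  unfolding G_def by auto

lemma G_big: "count (mset w) 2 \<ge> 2 \<or> count (mset w) 5 \<ge> 2 \<Longrightarrow> count M 2 \<le> 1 \<Longrightarrow> count M 5 \<le> 1 \<Longrightarrow> G M w = 0"
  unfolding G_def by auto

lemma count_M[simp]:
  "count (MA m) 2 = 0" "count (MA m) 5 = 0"
  "count (MB 2 m) 2 = 1" "count (MB 2 m) 5 = 0"
  "count (MB 5 m) 2 = 0" "count (MB 5 m) 5 = 1"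
  "count (MD m) 2 = 1" "count (MD m) 5 = 1"
  by (auto simp: MA_def MB_def MD_def)

lemma mset_S0:
  assumes "set w \<subseteq> S0"
  shows "mset w = replicate_mset (count (mset w) 1) 1 + replicate_mset (count (mset w) 2) 2 + replicate_mset (count (mset w) 5) 5"
proof (rule multiset_eqI)
  fix a
  show "count (mset w) a = count (replicate_mset (count (mset w) 1) 1 + replicate_mset (count (mset w) 2) 2 + replicate_mset (count (mset w) 5) 5) a"
  proof (cases "a \<in> S0")
    case True
    then show ?thesis by auto
  next
    case False
    then have "a \<notin> set w" using assms by auto
    then have "count (mset w) a = 0" by (simp add: count_eq_zero_iff)
    then show ?thesis using False by auto
  qed
qed

lemma sort_S0:
  assumes "set w \<subseteq> S0"
  shows "sort w = replicate (count (mset w) 1) 1 @ replicate (count (mset w) 2) 2 @ replicate (count (mset w) 5) 5"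
proof (rule properties_for_sort)
  show "mset (replicate (count (mset w) 1) 1 @ replicate (count (mset w) 2) 2 @ replicate (count (mset w) 5) 5) = mset w"
    using mset_S0[OF assms] by (simp add: ac_simps)
  show "sorted (replicate (count (mset w) 1) (1::nat) @ replicate (count (mset w) 2) 2 @ replicate (count (mset w) 5) 5)"
    by (auto simp: sorted_append)
qed

lemma rep2:
  assumes "2 \<le> k"
  shows "replicate k x = x # x # replicate (k - 2) x"
proof -
  obtain j where kj: "k = Suc (Suc j)" using assms by (metis add_2_eq_Suc le_Suc_ex)
  show ?thesis unfolding kj by simp
qed

lemma Comb:
  fixes c :: "nat list \<Rightarrow> 'a::field"
  assumes m: "m \<ge> 2" and H: "Hanti c"
    and Z2: "\<And>pre suf. c (pre @ 2 # 2 # suf) = 0" and Z5: "\<And>pre suf. c (pre @ 5 # 5 # suf) = 0"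
    and w: "w \<in> Wd m"
  shows "c w = c (replicate m 1) * G (MA m) w + c (replicate (m - 1) 1 @ [2]) * G (MB 2 m) w
             + c (replicate (m - 1) 1 @ [5]) * G (MB 5 m) w + c (replicate (m - 2) 1 @ [2, 5]) * G (MD m) w"
proof -
  have sw: "set w \<subseteq> S0" and lw: "length w = m" using w unfolding Wd_def by auto
  define k1 where "k1 = count (mset w) 1"
  define k2 where "k2 = count (mset w) 2"
  define k5 where "k5 = count (mset w) 5"
  have Mw: "mset w = replicate_mset k1 1 + replicate_mset k2 2 + replicate_mset k5 5"
    using mset_S0[OF sw] unfolding k1_def k2_def k5_def .
  have ksum: "k1 + k2 + k5 = m"
    using arg_cong[OF Mw, of size] lw by simp
  have R: "sort w = replicate k1 1 @ replicate k2 2 @ replicate k5 5"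
    using sort_S0[OF sw] unfolding k1_def k2_def k5_def .
  have cw: "c w = (-1) ^ inv w * c (sort w)" using sort_sign[OF H] .
  show ?thesis
  proof (cases "k2 \<ge> 2 \<or> k5 \<ge> 2")
    case True
    have "c (sort w) = 0"
    proof (cases "k2 \<ge> 2")
      case True
      then have "sort w = replicate k1 1 @ 2 # 2 # (replicate (k2 - 2) 2 @ replicate k5 5)"
        using R rep2[OF True, of 2] by simp
      then show ?thesis using Z2 by simp
    next
      case False
      then have k5: "k5 \<ge> 2" using \<open>k2 \<ge> 2 \<or> k5 \<ge> 2\<close> by simp
      then have "sort w = (replicate k1 1 @ replicate k2 2) @ 5 # 5 # replicate (k5 - 2) 5"
        using R rep2[OF k5, of 5] by simp
      then show ?thesis using Z5[of "replicate k1 1 @ replicate k2 2"] by simp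
    qed
    moreover have "G (MA m) w = (0::'a)" "G (MB 2 m) w = (0::'a)" "G (MB 5 m) w = (0::'a)" "G (MD m) w = (0::'a)"
      using True by (auto intro!: G_big simp: k2_def[symmetric] k5_def[symmetric])
    ultimately show ?thesis using cw by (metis add.right_neutral add_0 mult.commute mult_zero_right)
  next
    case False
    then have k2: "k2 = 0 \<or> k2 = 1" and k5: "k5 = 0 \<or> k5 = 1" by auto
    then show ?thesis
    proof (elim disjE)
      assume a: "k2 = 0" "k5 = 0"
      then have "mset w = MA m" using Mw ksum by (simp add: MA_def)
      then have "G (MA m) w = (-1) ^ inv w" by (rule G_eq)
      moreover have "sort w = replicate m 1" using R a ksum by simp
      moreover have "G (MB 2 m) w = (0::'a)" "G (MB 5 m) w = (0::'a)" "G (MD m) w = (0::'a)"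
        using a G_ne[of w 2 "MB 2 m"] G_ne[of w 5 "MB 5 m"] G_ne[of w 2 "MD m"] by (auto simp: k2_def[symmetric] k5_def[symmetric])
      ultimately show ?thesis using cw by (metis add.right_neutral add_0 mult.commute mult_zero_right)
    next
      assume a: "k2 = 0" "k5 = 1"
      have k1: "k1 = m - 1" using ksum a by simp
      then have "mset w = MB 5 m" using Mw ksum k1 a by (simp add: MB_def)
      then have "G (MB 5 m) w = (-1) ^ inv w" by (rule G_eq)
      moreover have "sort w = replicate (m - 1) 1 @ [5]" using R a ksum by simp
      moreover have "G (MA m) w = (0::'a)" "G (MB 2 m) w = (0::'a)" "G (MD m) w = (0::'a)"
        using a G_ne[of w 5 "MA m"] G_ne[of w 2 "MB 2 m"] G_ne[of w 2 "MD m"] by (auto simp: k2_def[symmetric] k5_def[symmetric])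
      ultimately show ?thesis using cw by (metis add.right_neutral add_0 mult.commute mult_zero_right)
    next
      assume a: "k2 = 1" "k5 = 0"
      have k1: "k1 = m - 1" using ksum a by simp
      then have "mset w = MB 2 m" using Mw ksum k1 a by (simp add: MB_def)
      then have "G (MB 2 m) w = (-1) ^ inv w" by (rule G_eq)
      moreover have "sort w = replicate (m - 1) 1 @ [2]" using R a ksum by simp
      moreover have "G (MA m) w = (0::'a)" "G (MB 5 m) w = (0::'a)" "G (MD m) w = (0::'a)"
        using a G_ne[of w 2 "MA m"] G_ne[of w 2 "MB 5 m"] G_ne[of w 5 "MD m"] by (auto simp: k2_def[symmetric] k5_def[symmetric])
      ultimately show ?thesis using cw by (metis add.right_neutral add_0 mult.commute mult_zero_right)
    next
      assume a: "k2 = 1" "k5 = 1"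
      have k1: "k1 = m - 2" using ksum a by simp
      then have "mset w = MD m" using Mw ksum k1 a by (simp add: MD_def add_mset_commute)
      then have "G (MD m) w = (-1) ^ inv w" by (rule G_eq)
      moreover have "sort w = replicate (m - 2) 1 @ [2, 5]" using R a ksum by simp
      moreover have "G (MA m) w = (0::'a)" "G (MB 5 m) w = (0::'a)" "G (MB 2 m) w = (0::'a)"
        using a G_ne[of w 2 "MA m"] G_ne[of w 2 "MB 5 m"] G_ne[of w 5 "MB 2 m"] by (auto simp: k2_def[symmetric] k5_def[symmetric])
      ultimately show ?thesis using cw by (metis add.right_neutral add_0 mult.commute mult_zero_right)
    qed
  qed
qed


definition Rel2 :: "nat \<Rightarrow> (nat list \<Rightarrow> 'a::field) \<Rightarrow> bool" where
  "Rel2 m c \<longleftrightarrow> (\<forall>pre suf. set pre \<subseteq> S0 \<longrightarrow> set suf \<subseteq> S0 \<longrightarrow> length pre + length suf + 2 = m \<longrightarrow>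
     c (pre @ 1 # 2 # suf) + c (pre @ 2 # 1 # suf) = 0 \<and> c (pre @ 2 # 2 # suf) = 0 \<and>
     c (pre @ 1 # 5 # suf) + c (pre @ 5 # 1 # suf) = 0 \<and> c (pre @ 2 # 5 # suf) + c (pre @ 5 # 2 # suf) = 0 \<and>
     c (pre @ 5 # 5 # suf) = 0)"

lemma Qsum:
  assumes pre: "set pre \<subseteq> S0" and suf: "set suf \<subseteq> S0" and len: "length pre + length suf + 2 = m"
  shows "(\<Sum>w\<in>Wd m. if Qd pre suf t w then c w else 0) =
         (\<Sum>p\<in>{(s, s'). s \<in> S0 \<and> s' \<in> S0 \<and> s + s' = t}. c (pre @ fst p # snd p # suf))"
proof -
  let ?P = "{(s, s'). s \<in> S0 \<and> s' \<in> S0 \<and> s + s' = t}"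
  let ?h = "\<lambda>p. pre @ fst p # snd p # suf"
  have "(\<Sum>w\<in>Wd m. if Qd pre suf t w then c w else 0) = (\<Sum>w\<in>{w \<in> Wd m. Qd pre suf t w}. c w)"
    by (simp add: sum.inter_filter)
  also have "{w \<in> Wd m. Qd pre suf t w} = ?h ` ?P"
  proof (intro equalityI subsetI)
    fix w assume "w \<in> {w \<in> Wd m. Qd pre suf t w}"
    then obtain s s' where ss: "s \<in> S0" "s' \<in> S0" "s + s' = t" "w = pre @ s # s' # suf"
      unfolding Qd_def by blast
    then have "(s, s') \<in> ?P" by simp
    moreover have "w = ?h (s, s')" using ss by simp
    ultimately show "w \<in> ?h ` ?P" by (rule rev_image_eqI)
  next
    fix w assume "w \<in> ?h ` ?P"
    then obtain s s' where ss: "s \<in> S0" "s' \<in> S0" "s + s' = t" "w = pre @ s # s' # suf" by auto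
    then show "w \<in> {w \<in> Wd m. Qd pre suf t w}"
      using pre suf len unfolding Qd_def Wd_def by auto
  qed
  also have "(\<Sum>w\<in>?h ` ?P. c w) = (\<Sum>p\<in>?P. c (?h p))"
    by (rule sum.reindex_cong[where l = ?h]) (auto simp: inj_on_def)
  finally show ?thesis .
qed

lemma pairs:
  "{(s, s'). s \<in> S0 \<and> s' \<in> S0 \<and> s + s' = (3::nat)} = {(1, 2), (2, 1)}"
  "{(s, s'). s \<in> S0 \<and> s' \<in> S0 \<and> s + s' = (4::nat)} = {(2, 2)}"
  "{(s, s'). s \<in> S0 \<and> s' \<in> S0 \<and> s + s' = (6::nat)} = {(1, 5), (5, 1)}"
  "{(s, s'). s \<in> S0 \<and> s' \<in> S0 \<and> s + s' = (7::nat)} = {(2, 5), (5, 2)}"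
  "{(s, s'). s \<in> S0 \<and> s' \<in> S0 \<and> s + s' = (10::nat)} = {(5, 5)}"
  by auto

lemma Rel_iff: "Rel m c \<longleftrightarrow> Rel2 m c"
proof
  assume R: "Rel m c"
  show "Rel2 m c" unfolding Rel2_def
  proof (intro allI impI)
    fix pre suf assume h: "set pre \<subseteq> S0" "set suf \<subseteq> S0" "length pre + length suf + 2 = m"
    have e: "(\<Sum>p\<in>{(s, s'). s \<in> S0 \<and> s' \<in> S0 \<and> s + s' = t}. c (pre @ fst p # snd p # suf)) = 0"
      if "t \<in> T0" for t
    proof -
      have "(\<Sum>w\<in>Wd m. if Qd pre suf t w then c w else 0) = 0"
        using R h that unfolding Rel_def by blast
      then show ?thesis using Qsum[OF h, of t c] by simp
    qed
    show "c (pre @ 1 # 2 # suf) + c (pre @ 2 # 1 # suf) = 0 \<and> c (pre @ 2 # 2 # suf) = 0 \<and>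
     c (pre @ 1 # 5 # suf) + c (pre @ 5 # 1 # suf) = 0 \<and> c (pre @ 2 # 5 # suf) + c (pre @ 5 # 2 # suf) = 0 \<and>
     c (pre @ 5 # 5 # suf) = 0"
      using e[of 3] e[of 4] e[of 6] e[of 7] e[of 10] unfolding pairs by simp
  qed
next
  assume R: "Rel2 m c"
  show "Rel m c" unfolding Rel_def
  proof (intro allI impI)
    fix pre suf t assume h: "set pre \<subseteq> S0" "set suf \<subseteq> S0" "length pre + length suf + 2 = m" and t: "t \<in> T0"
    have r: "c (pre @ 1 # 2 # suf) + c (pre @ 2 # 1 # suf) = 0 \<and> c (pre @ 2 # 2 # suf) = 0 \<and>
     c (pre @ 1 # 5 # suf) + c (pre @ 5 # 1 # suf) = 0 \<and> c (pre @ 2 # 5 # suf) + c (pre @ 5 # 2 # suf) = 0 \<and>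
     c (pre @ 5 # 5 # suf) = 0" using R h unfolding Rel2_def by blast
    from t have "t = 3 \<or> t = 4 \<or> t = 6 \<or> t = 7 \<or> t = 10" by auto
    then show "(\<Sum>w\<in>Wd m. if Qd pre suf t w then c w else 0) = 0"
    proof (elim disjE)
      assume tt: "t = 3" show ?thesis unfolding tt Qsum[OF h] pairs(1) using r by simp
    next
      assume tt: "t = 4" show ?thesis unfolding tt Qsum[OF h] pairs(2) using r by simp
    next
      assume tt: "t = 6" show ?thesis unfolding tt Qsum[OF h] pairs(3) using r by simp
    next
      assume tt: "t = 7" show ?thesis unfolding tt Qsum[OF h] pairs(4) using r by simp
    next
      assume tt: "t = 10" show ?thesis unfolding tt Qsum[OF h] pairs(5) using r by simp
    qed
  qed
qed

lemma Wd_swap: "pre @ x # y # suf \<in> Wd m \<longleftrightarrow> pre @ y # x # suf \<in> Wd m"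
  unfolding Wd_def by auto

lemma Hanti_restrict:
  assumes R: "Rel2 m c"
  shows "Hanti (\<lambda>w. if w \<in> Wd m then c w else 0)"
  unfolding Hanti_def
proof (intro allI impI)
  fix pre suf x y assume xy: "(x::nat) \<noteq> y"
  show "(if pre @ x # y # suf \<in> Wd m then c (pre @ x # y # suf) else 0) =
        - (if pre @ y # x # suf \<in> Wd m then c (pre @ y # x # suf) else 0)"
  proof (cases "pre @ x # y # suf \<in> Wd m")
    case True
    then have h: "set pre \<subseteq> S0" "set suf \<subseteq> S0" "length pre + length suf + 2 = m" "x \<in> S0" "y \<in> S0"
      unfolding Wd_def by auto
    have r: "c (pre @ 1 # 2 # suf) + c (pre @ 2 # 1 # suf) = 0 \<and>
     c (pre @ 1 # 5 # suf) + c (pre @ 5 # 1 # suf) = 0 \<and> c (pre @ 2 # 5 # suf) + c (pre @ 5 # 2 # suf) = 0"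
      using R h unfolding Rel2_def by blast
    have "c (pre @ x # y # suf) = - c (pre @ y # x # suf)"
      using h(4,5) xy r by (auto simp: eq_neg_iff_add_eq_0 add.commute)
    then show ?thesis using True Wd_swap by simp
  next
    case False
    then show ?thesis using Wd_swap by simp
  qed
qed

lemma Z_restrict:
  assumes R: "Rel2 m c"
  shows "(if pre @ 2 # 2 # suf \<in> Wd m then c (pre @ 2 # 2 # suf) else 0) = 0"
    "(if pre @ 5 # 5 # suf \<in> Wd m then c (pre @ 5 # 5 # suf) else 0) = 0"
  using R unfolding Rel2_def Wd_def by auto

lemma Rel2_G:
  assumes "count M 2 \<le> 1" "count M 5 \<le> 1"
  shows "Rel2 m (G M :: nat list \<Rightarrow> 'a::field)"
proof -
  have sw: "(G M (pre @ x # y # suf) :: 'a) + G M (pre @ y # x # suf) = 0" if "x \<noteq> y" for pre suf x y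
    using inv_swap[OF that, of pre suf, where 'a='a] unfolding G_def by auto
  have z: "(G M (pre @ a # a # suf) :: 'a) = 0" if "a = 2 \<or> a = 5" for pre suf a
    using that assms by (intro G_ne[of _ a]) auto
  show ?thesis unfolding Rel2_def using sw z by simp
qed


lemma rep_mset_add: "replicate_mset a x + replicate_mset b x = replicate_mset (a + b) x"
  by (induct a) auto

lemma mset_rep_eq: "mset w = replicate_mset m x \<Longrightarrow> w = replicate m x"
proof -
  assume h: "mset w = replicate_mset m x"
  then have "size (mset w) = m" by simp
  then have "length w = m" by simp
  moreover have "set_mset (mset w) \<subseteq> {x}" using h by simp
  then have "\<forall>y\<in>set w. y = x" by auto
  ultimately show ?thesis using replicate_length_same[of w x] by simp
qed

lemma word_i_set: "set (word_i m s i) \<subseteq> {1, s}"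
  unfolding word_i_def by auto

lemma word_i_len: "i < m \<Longrightarrow> length (word_i m s i) = m"
  unfolding word_i_def by simp

lemma word_i_Wd: "i < m \<Longrightarrow> s \<in> S0 \<Longrightarrow> word_i m s i \<in> Wd m"
  using word_i_set[of m s i] word_i_len[of i m s] unfolding Wd_def by auto

lemma word_i_mset: "i < m \<Longrightarrow> mset (word_i m s i) = MB s m"
proof -
  assume "i < m"
  then have e: "i + (m - Suc i) = m - Suc 0" by simp
  show ?thesis by (simp add: word_i_def MB_def rep_mset_add e)
qed

lemma inv_rep1: "\<forall>y\<in>set v. 1 \<le> y \<Longrightarrow> inv (replicate i 1 @ v) = inv v"
proof (induction i)
  case 0
  then show ?case by simp
next
  case (Suc i)
  have "filter (\<lambda>y. y < 1) (replicate i 1 @ v) = []" using Suc.prems by (auto simp: filter_empty_conv)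
  then show ?case using Suc by (simp add: inv_Cons)
qed

lemma word_i_inv: "1 < s \<Longrightarrow> inv (word_i m s i) = m - 1 - i"
proof -
  assume s: "1 < s"
  have "inv (word_i m s i) = inv (s # replicate (m - 1 - i) 1)"
    unfolding word_i_def using s by (subst inv_rep1) auto
  also have "\<dots> = m - 1 - i"
    using s by (simp add: inv_Cons inv_sorted)
  finally show ?thesis .
qed

lemma word_i_nth: "k < m \<Longrightarrow> i < m \<Longrightarrow> word_i m s i ! k = (if k = i then s else 1)"
  unfolding word_i_def by (auto simp: nth_append)

lemma word_i_inj: "s \<noteq> 1 \<Longrightarrow> i < m \<Longrightarrow> j < m \<Longrightarrow> word_i m s i = word_i m s j \<Longrightarrow> i = j"
  using word_i_nth[of i m i s] word_i_nth[of i m j s] by (metis)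

lemma mset_MB_word:
  assumes h: "mset w = MB s m" and s: "s \<noteq> 1" and m: "m \<ge> 1"
  shows "\<exists>i<m. w = word_i m s i"
proof -
  have "s \<in># mset w" using h unfolding MB_def by simp
  then have "s \<in> set w" by simp
  then obtain xs ys where w: "w = xs @ s # ys" by (meson split_list)
  then have "mset xs + mset ys = replicate_mset (m - 1) 1" using h unfolding MB_def by simp
  then have "set_mset (mset xs + mset ys) \<subseteq> {1}" by simp
  then have a1: "\<forall>y\<in>set xs. y = 1" and a2: "\<forall>y\<in>set ys. y = 1" by auto
  have xs: "xs = replicate (length xs) 1" using replicate_length_same[OF a1] by simp
  have ys: "ys = replicate (length ys) 1" using replicate_length_same[OF a2] by simp
  have "size (mset w) = size (MB s m)" using h by simp
  then have "length w = m" unfolding MB_def using m by simp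
  then have l: "length xs + length ys + 1 = m" using w by simp
  show ?thesis
  proof (intro exI conjI)
    show "length xs < m" using l by simp
    show "w = word_i m s (length xs)"
      unfolding word_i_def using w xs ys l by (metis append_Cons append_Nil add_diff_cancel_left' add.commute diff_diff_left)
  qed
qed


lemma Sh_sub: "Sh m \<subseteq> Wd m"
proof
  fix w assume "w \<in> Sh m"
  then have h: "length w = m" "mset w = replicate_mset (m - 2) 1 + {#2, 5#}" unfolding Sh_def by auto
  have "set_mset (mset w) \<subseteq> S0" using h(2) by auto
  then show "w \<in> Wd m" using h(1) unfolding Wd_def by simp
qed

lemma finite_Sh: "finite (Sh m)"
  using finite_subset[OF Sh_sub finite_Wd] .

lemma Amw_comb: "Amw n lam m = (\<lambda>q. \<Sum>i\<in>{0::nat}. 1 * fw n lam (replicate m 1) q)"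
  unfolding Amw_def by simp

lemma Dmw_comb: "Dmw n lam m = (\<lambda>q. \<Sum>w\<in>Sh m. (-1) ^ inv w * fw n lam ((\<lambda>x. x) w) q)"
  unfolding Dmw_def by simp

lemma rep1_Wd: "replicate m 1 \<in> Wd m" "replicate m (Suc 0) \<in> Wd m"
  unfolding Wd_def by auto

lemma A_E:
  fixes lam :: "'a::field"
  assumes n: "n > 10" and l: "lam ^ n = 1"
  shows "Amw n lam m \<in> Esp n m lam"
  unfolding Amw_comb by (rule comb_in_E[OF n l]) (auto simp: rep1_Wd)

lemma B_E:
  fixes lam :: "'a::field"
  assumes n: "n > 10" and l: "lam ^ n = 1" and s: "s \<in> S0"
  shows "Bsw n lam s m \<in> Esp n m lam"
  unfolding Bsw_def by (rule comb_in_E[OF n l]) (auto intro: word_i_Wd[OF _ s])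

lemma D_E:
  fixes lam :: "'a::field"
  assumes n: "n > 10" and l: "lam ^ n = 1"
  shows "Dmw n lam m \<in> Esp n m lam"
  unfolding Dmw_comb by (rule comb_in_E[OF n l finite_Sh]) (use Sh_sub in auto)

lemma A_coef:
  fixes lam :: "'a::field"
  assumes n: "n > 10" and w: "w \<in> Wd m"
  shows "Amw n lam m (walk n 0 w) = G (MA m) w"
proof -
  have sw: "set w \<subseteq> S0" using w unfolding Wd_def by auto
  have "Amw n lam m (walk n 0 w) = (if replicate m 1 = w then 1 else 0)"
  proof -
    have n0: "0 < n" using n by simp
    have rs: "set (replicate m (1::nat)) \<subseteq> S0" by auto
    show ?thesis unfolding Amw_def using fw_walk[OF n n0 sw rs, of lam] by auto
  qed
  also have "\<dots> = G (MA m) w"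
  proof (cases "mset w = MA m")
    case True
    then have wr: "w = replicate m 1" unfolding MA_def by (rule mset_rep_eq)
    have "inv (replicate m (1::nat)) = 0" by (rule inv_sorted) simp
    then show ?thesis using True wr unfolding G_def by simp
  next
    case False
    then have "w \<noteq> replicate m 1" unfolding MA_def by (metis mset_replicate)
    then show ?thesis using False unfolding G_def by simp
  qed
  finally show ?thesis .
qed

lemma B_coef:
  fixes lam :: "'a::field"
  assumes n: "n > 10" and w: "w \<in> Wd m" and s: "s = 2 \<or> s = 5" and m: "m \<ge> 1"
  shows "Bsw n lam s m (walk n 0 w) = G (MB s m) w"
proof -
  have sw: "set w \<subseteq> S0" using w unfolding Wd_def by auto
  have sS: "s \<in> S0" using s by auto
  have "Bsw n lam s m (walk n 0 w) = (\<Sum>i<m. if word_i m s i = w then (-1) ^ (m - 1 - i) else 0)"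
    unfolding Bsw_def
    by (rule comb_eval[OF n _ sw]) (use word_i_set[of m s] sS in blast)
  also have "\<dots> = G (MB s m) w"
  proof (cases "mset w = MB s m")
    case True
    then obtain i0 where i0: "i0 < m" "w = word_i m s i0" using mset_MB_word s m by force
    have "(\<Sum>i<m. if word_i m s i = w then (-1) ^ (m - 1 - i) else 0) =
          (\<Sum>i<m. if i = i0 then (-1) ^ (m - 1 - i) else (0::'a))"
      using word_i_inj[of s _ m i0] i0 s by (intro sum.cong refl) auto
    also have "\<dots> = (-1) ^ (m - 1 - i0)" using i0 by simp
    also have "\<dots> = G (MB s m) w" using True i0 word_i_inv[of s m i0] s unfolding G_def by auto
    finally show ?thesis .
  next
    case False
    have "word_i m s i \<noteq> w" if "i < m" for i using word_i_mset[OF that, of s] False by auto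
    then have "(\<Sum>i<m. if word_i m s i = w then (-1) ^ (m - 1 - i) else (0::'a)) = 0"
      by (intro sum.neutral) auto
    then show ?thesis using False unfolding G_def by simp
  qed
  finally show ?thesis .
qed

lemma D_coef:
  fixes lam :: "'a::field"
  assumes n: "n > 10" and w: "w \<in> Wd m"
  shows "Dmw n lam m (walk n 0 w) = G (MD m) w"
proof -
  have sw: "set w \<subseteq> S0" using w unfolding Wd_def by auto
  have "Dmw n lam m (walk n 0 w) = (\<Sum>w'\<in>Sh m. if w' = w then (-1) ^ inv w' else 0)"
    unfolding Dmw_comb
    by (rule comb_eval[OF n _ sw]) (use Sh_sub in \<open>auto simp: Wd_def\<close>)
  also have "\<dots> = (if w \<in> Sh m then (-1) ^ inv w else 0)"
    using finite_Sh by (simp add: sum.delta')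
  also have "\<dots> = G (MD m) w"
    using w unfolding G_def Sh_def MD_def Wd_def by auto
  finally show ?thesis .
qed


lemma vs_chain: "vector_space (chain_scale :: 'a::field \<Rightarrow> 'a chain \<Rightarrow> 'a chain)"
  by unfold_locales (auto simp: chain_scale_def fun_eq_iff algebra_simps)

lemma sum_fun_apply: "(\<Sum>v\<in>S. f v) x = (\<Sum>v\<in>S. f v x)"
  by (induct S rule: infinite_finite_induct) auto

lemma boundary_add: "boundary n m (u + v) = boundary n m u + boundary n m v"
  unfolding boundary_def
  by (auto simp: fun_eq_iff sum.distrib[symmetric] distrib_left intro!: sum.cong)

lemma boundary_scale: "boundary n m (chain_scale c u) = chain_scale c (boundary n m u)"
  unfolding boundary_def chain_scale_def
  by (auto simp: fun_eq_iff sum_distrib_left intro!: sum.cong)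

lemma Omega_eig_alt:
  assumes "m \<ge> 2"
  shows "u \<in> Omega_eig n S0 m lam \<longleftrightarrow>
     u \<in> A_space n S0 m \<and> boundary n m u \<in> A_space n S0 (m - 1) \<and> tau n u = chain_scale lam u"
  using assms unfolding Omega_eig_def Omega_def by auto

lemma Omega_char:
  fixes lam :: "'a::field"
  assumes n: "n > 10" and l: "lam ^ n = 1" and m: "m \<ge> 2"
  shows "u \<in> Omega_eig n S0 m lam \<longleftrightarrow> u \<in> Esp n m lam \<and> Rel2 m (\<lambda>w. u (walk n 0 w))"
proof
  assume u: "u \<in> Omega_eig n S0 m lam"
  then have E: "u \<in> Esp n m lam" using Omega_eig_alt[OF m] unfolding Esp_def by auto
  have "boundary n m u \<in> A_space n S0 (m - 1)" using u Omega_eig_alt[OF m] by auto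
  then show "u \<in> Esp n m lam \<and> Rel2 m (\<lambda>w. u (walk n 0 w))"
    using Omega_iff[OF n l E m] Rel_iff E by auto
next
  assume h: "u \<in> Esp n m lam \<and> Rel2 m (\<lambda>w. u (walk n 0 w))"
  then have "boundary n m u \<in> A_space n S0 (m - 1)"
    using Omega_iff[OF n l _ m] Rel_iff by blast
  then show "u \<in> Omega_eig n S0 m lam" using h Omega_eig_alt[OF m] unfolding Esp_def by auto
qed

lemma Rel2_cong:
  assumes "\<forall>w\<in>Wd m. c w = c' w"
  shows "Rel2 m c \<longleftrightarrow> Rel2 m c'"
proof -
  have mem: "pre @ a # b # suf \<in> Wd m" if "set pre \<subseteq> S0" "set suf \<subseteq> S0"
      "length pre + length suf + 2 = m" "a \<in> S0" "b \<in> S0" for pre suf a b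
    using that unfolding Wd_def by auto
  have e: "c (pre @ a # b # suf) = c' (pre @ a # b # suf)" if "set pre \<subseteq> S0" "set suf \<subseteq> S0"
      "length pre + length suf + 2 = m" "a \<in> S0" "b \<in> S0" for pre suf a b
    using assms mem[OF that] by blast
  show ?thesis unfolding Rel2_def
  proof (intro iffI allI impI)
    fix pre suf
    assume "\<forall>pre suf. set pre \<subseteq> S0 \<longrightarrow> set suf \<subseteq> S0 \<longrightarrow> length pre + length suf + 2 = m \<longrightarrow>
           c (pre @ 1 # 2 # suf) + c (pre @ 2 # 1 # suf) = 0 \<and> c (pre @ 2 # 2 # suf) = 0 \<and>
           c (pre @ 1 # 5 # suf) + c (pre @ 5 # 1 # suf) = 0 \<and> c (pre @ 2 # 5 # suf) + c (pre @ 5 # 2 # suf) = 0 \<and>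
           c (pre @ 5 # 5 # suf) = 0"
      and h: "set pre \<subseteq> S0" "set suf \<subseteq> S0" "length pre + length suf + 2 = m"
    then have r: "c (pre @ 1 # 2 # suf) + c (pre @ 2 # 1 # suf) = 0 \<and> c (pre @ 2 # 2 # suf) = 0 \<and>
           c (pre @ 1 # 5 # suf) + c (pre @ 5 # 1 # suf) = 0 \<and> c (pre @ 2 # 5 # suf) + c (pre @ 5 # 2 # suf) = 0 \<and>
           c (pre @ 5 # 5 # suf) = 0" by blast
    show "c' (pre @ 1 # 2 # suf) + c' (pre @ 2 # 1 # suf) = 0 \<and> c' (pre @ 2 # 2 # suf) = 0 \<and>
           c' (pre @ 1 # 5 # suf) + c' (pre @ 5 # 1 # suf) = 0 \<and> c' (pre @ 2 # 5 # suf) + c' (pre @ 5 # 2 # suf) = 0 \<and>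
           c' (pre @ 5 # 5 # suf) = 0"
      using r e[OF h] by simp
  next
    fix pre suf
    assume "\<forall>pre suf. set pre \<subseteq> S0 \<longrightarrow> set suf \<subseteq> S0 \<longrightarrow> length pre + length suf + 2 = m \<longrightarrow>
           c' (pre @ 1 # 2 # suf) + c' (pre @ 2 # 1 # suf) = 0 \<and> c' (pre @ 2 # 2 # suf) = 0 \<and>
           c' (pre @ 1 # 5 # suf) + c' (pre @ 5 # 1 # suf) = 0 \<and> c' (pre @ 2 # 5 # suf) + c' (pre @ 5 # 2 # suf) = 0 \<and>
           c' (pre @ 5 # 5 # suf) = 0"
      and h: "set pre \<subseteq> S0" "set suf \<subseteq> S0" "length pre + length suf + 2 = m"
    then have r: "c' (pre @ 1 # 2 # suf) + c' (pre @ 2 # 1 # suf) = 0 \<and> c' (pre @ 2 # 2 # suf) = 0 \<and>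
           c' (pre @ 1 # 5 # suf) + c' (pre @ 5 # 1 # suf) = 0 \<and> c' (pre @ 2 # 5 # suf) + c' (pre @ 5 # 2 # suf) = 0 \<and>
           c' (pre @ 5 # 5 # suf) = 0" by blast
    show "c (pre @ 1 # 2 # suf) + c (pre @ 2 # 1 # suf) = 0 \<and> c (pre @ 2 # 2 # suf) = 0 \<and>
           c (pre @ 1 # 5 # suf) + c (pre @ 5 # 1 # suf) = 0 \<and> c (pre @ 2 # 5 # suf) + c (pre @ 5 # 2 # suf) = 0 \<and>
           c (pre @ 5 # 5 # suf) = 0"
      using r e[OF h] by simp
  qed
qed


definition wA :: "nat \<Rightarrow> nat list" where "wA m = replicate m 1"
definition wB :: "nat \<Rightarrow> nat \<Rightarrow> nat list" where "wB s m = replicate (m - 1) 1 @ [s]"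
definition wD :: "nat \<Rightarrow> nat list" where "wD m = replicate (m - 2) 1 @ [2, 5]"

lemma test_Wd:
  assumes "m \<ge> 2"
  shows "wA m \<in> Wd m" "wB 2 m \<in> Wd m" "wB 5 m \<in> Wd m" "wD m \<in> Wd m"
  using assms unfolding wA_def wB_def wD_def Wd_def by auto

lemma test_G:
  assumes m: "m \<ge> 2"
  shows "(G (MA m) (wA m) :: 'a::field) = 1" "(G (MB 2 m) (wA m) :: 'a) = 0" "(G (MB 5 m) (wA m) :: 'a) = 0" "(G (MD m) (wA m) :: 'a) = 0"
    "(G (MA m) (wB 2 m) :: 'a::field) = 0" "(G (MB 2 m) (wB 2 m) :: 'a) = 1" "(G (MB 5 m) (wB 2 m) :: 'a) = 0" "(G (MD m) (wB 2 m) :: 'a) = 0"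
    "(G (MA m) (wB 5 m) :: 'a::field) = 0" "(G (MB 2 m) (wB 5 m) :: 'a) = 0" "(G (MB 5 m) (wB 5 m) :: 'a) = 1" "(G (MD m) (wB 5 m) :: 'a) = 0"
    "(G (MA m) (wD m) :: 'a::field) = 0" "(G (MB 2 m) (wD m) :: 'a) = 0" "(G (MB 5 m) (wD m) :: 'a) = 0" "(G (MD m) (wD m) :: 'a) = 1"
proof -
  have sA: "sorted (wA m)" unfolding wA_def by simp
  have sB2: "sorted (wB 2 m)" unfolding wB_def by (auto simp: sorted_append)
  have sB5: "sorted (wB 5 m)" unfolding wB_def by (auto simp: sorted_append)
  have sD: "sorted (wD m)" unfolding wD_def by (auto simp: sorted_append)
  have mA: "mset (wA m) = MA m" unfolding wA_def MA_def by simp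
  have mB2: "mset (wB 2 m) = MB 2 m" unfolding wB_def MB_def by simp
  have mB5: "mset (wB 5 m) = MB 5 m" unfolding wB_def MB_def by simp
  have mD: "mset (wD m) = MD m" unfolding wD_def MD_def by simp
  have c: "count (mset (wA m)) 2 = 0" "count (mset (wA m)) 5 = 0"
    "count (mset (wB 2 m)) 2 = 1" "count (mset (wB 2 m)) 5 = 0"
    "count (mset (wB 5 m)) 2 = 0" "count (mset (wB 5 m)) 5 = 1"
    "count (mset (wD m)) 2 = 1" "count (mset (wD m)) 5 = 1"
    unfolding mA mB2 mB5 mD by simp_all
  show "(G (MA m) (wA m) :: 'a::field) = 1" using G_eq[OF mA] inv_sorted[OF sA] by simp
  show "(G (MB 2 m) (wB 2 m) :: 'a::field) = 1" using G_eq[OF mB2] inv_sorted[OF sB2] by simp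
  show "(G (MB 5 m) (wB 5 m) :: 'a::field) = 1" using G_eq[OF mB5] inv_sorted[OF sB5] by simp
  show "(G (MD m) (wD m) :: 'a::field) = 1" using G_eq[OF mD] inv_sorted[OF sD] by simp
  show "(G (MB 2 m) (wA m) :: 'a) = 0" by (rule G_ne[of _ 2]) (simp add: c)
  show "(G (MB 5 m) (wA m) :: 'a) = 0" by (rule G_ne[of _ 5]) (simp add: c)
  show "(G (MD m) (wA m) :: 'a) = 0" by (rule G_ne[of _ 2]) (simp add: c)
  show "(G (MA m) (wB 2 m) :: 'a) = 0" by (rule G_ne[of _ 2]) (simp add: c)
  show "(G (MB 5 m) (wB 2 m) :: 'a) = 0" by (rule G_ne[of _ 2]) (simp add: c)
  show "(G (MD m) (wB 2 m) :: 'a) = 0" by (rule G_ne[of _ 5]) (simp add: c)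
  show "(G (MA m) (wB 5 m) :: 'a) = 0" by (rule G_ne[of _ 5]) (simp add: c)
  show "(G (MB 2 m) (wB 5 m) :: 'a) = 0" by (rule G_ne[of _ 2]) (simp add: c)
  show "(G (MD m) (wB 5 m) :: 'a) = 0" by (rule G_ne[of _ 2]) (simp add: c)
  show "(G (MA m) (wD m) :: 'a) = 0" by (rule G_ne[of _ 2]) (simp add: c)
  show "(G (MB 2 m) (wD m) :: 'a) = 0" by (rule G_ne[of _ 5]) (simp add: c)
  show "(G (MB 5 m) (wD m) :: 'a) = 0" by (rule G_ne[of _ 2]) (simp add: c)
qed


theorem mainTheorem16:
  fixes n m :: nat and lam :: "'a::field_char_0"
  assumes "n > 10"
    and "\<exists>\<zeta>::'a. \<zeta> ^ n = 1 \<and> (\<forall>k. 0 < k \<and> k < n \<longrightarrow> \<zeta> ^ k \<noteq> 1)"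
    and "lam ^ n = 1"
    and "m \<ge> 2"
  shows "Omega_eig n {1, 2, 5} m lam =
           module.span chain_scale {Amw n lam m, Bsw n lam 2 m, Bsw n lam 5 m, Dmw n lam m}
         \<and> vector_space.dim chain_scale (Omega_eig n {1, 2, 5} m lam) = 4"
proof -
  interpret cs: vector_space "chain_scale :: 'a \<Rightarrow> 'a chain \<Rightarrow> 'a chain" by (rule vs_chain)
  have n: "n > 10" and l: "lam ^ n = 1" and m: "m \<ge> 2" using assms by auto
  define A where "A = Amw n lam m"
  define B2 where "B2 = Bsw n lam 2 m"
  define B5 where "B5 = Bsw n lam 5 m"
  define D where "D = Dmw n lam m"
  define \<Omega> where "\<Omega> = Omega_eig n S0 m lam"
  have AE: "A \<in> Esp n m lam" unfolding A_def by (rule A_E[OF n l])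
  have B2E: "B2 \<in> Esp n m lam" unfolding B2_def by (rule B_E[OF n l]) simp
  have B5E: "B5 \<in> Esp n m lam" unfolding B5_def by (rule B_E[OF n l]) simp
  have DE: "D \<in> Esp n m lam" unfolding D_def by (rule D_E[OF n l])
  have m1: "m \<ge> 1" using m by simp
  have cA: "\<forall>w\<in>Wd m. A (walk n 0 w) = G (MA m) w" unfolding A_def using A_coef[OF n] by blast
  have cB2: "\<forall>w\<in>Wd m. B2 (walk n 0 w) = G (MB 2 m) w" unfolding B2_def using B_coef[OF n _ _ m1] by blast
  have cB5: "\<forall>w\<in>Wd m. B5 (walk n 0 w) = G (MB 5 m) w" unfolding B5_def using B_coef[OF n _ _ m1] by blast
  have cD: "\<forall>w\<in>Wd m. D (walk n 0 w) = G (MD m) w" unfolding D_def using D_coef[OF n] by blast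
  have inO: "X \<in> \<Omega>" if "X \<in> Esp n m lam" "\<forall>w\<in>Wd m. X (walk n 0 w) = G M w" "count M 2 \<le> 1" "count M 5 \<le> 1" for X M
    unfolding \<Omega>_def using Omega_char[OF n l m] Rel2_cong[OF that(2)] Rel2_G[OF that(3,4)] that(1) by blast
  have gens: "{A, B2, B5, D} \<subseteq> \<Omega>"
    using inO[OF AE cA] inO[OF B2E cB2] inO[OF B5E cB5] inO[OF DE cD] by simp
  have sub: "cs.subspace \<Omega>"
    unfolding cs.subspace_def
  proof (intro conjI ballI allI)
    have "Rel2 m (\<lambda>w. (0::'a chain) (walk n 0 w))" unfolding Rel2_def by simp
    then show "0 \<in> \<Omega>" unfolding \<Omega>_def using Omega_char[OF n l m] Esp_zero by blast
  next
    fix x y assume x: "x \<in> \<Omega>" and y: "y \<in> \<Omega>"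
    then have h: "x \<in> A_space n S0 m" "boundary n m x \<in> A_space n S0 (m - 1)" "tau n x = chain_scale lam x"
       "y \<in> A_space n S0 m" "boundary n m y \<in> A_space n S0 (m - 1)" "tau n y = chain_scale lam y"
      unfolding \<Omega>_def using Omega_eig_alt[OF m] by auto
    have "tau n (x + y) = chain_scale lam (x + y)"
      using h(3,6) tau_add[of n x y] by (simp add: chain_scale_def fun_eq_iff algebra_simps)
    then show "x + y \<in> \<Omega>" unfolding \<Omega>_def Omega_eig_alt[OF m]
      using h A_space_add boundary_add by metis
  next
    fix c x assume x: "x \<in> \<Omega>"
    then have h: "x \<in> A_space n S0 m" "boundary n m x \<in> A_space n S0 (m - 1)" "tau n x = chain_scale lam x"
      unfolding \<Omega>_def using Omega_eig_alt[OF m] by auto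
    have "tau n (chain_scale c x) = chain_scale lam (chain_scale c x)"
      using h(3) tau_scale[of n c x] by (simp add: chain_scale_def fun_eq_iff algebra_simps)
    then show "chain_scale c x \<in> \<Omega>" unfolding \<Omega>_def Omega_eig_alt[OF m]
      using h A_space_scale boundary_scale by metis
  qed
  have span1: "cs.span {A, B2, B5, D} \<subseteq> \<Omega>" by (rule cs.span_minimal[OF gens sub])
  have span2: "\<Omega> \<subseteq> cs.span {A, B2, B5, D}"
  proof
    fix u assume u: "u \<in> \<Omega>"
    then have uE: "u \<in> Esp n m lam" and R: "Rel2 m (\<lambda>w. u (walk n 0 w))"
      unfolding \<Omega>_def using Omega_char[OF n l m] by auto
    define c' where "c' w = (if w \<in> Wd m then u (walk n 0 w) else 0)" for w
    have H: "Hanti c'" unfolding c'_def by (rule Hanti_restrict[OF R])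
    have Z2: "c' (pre @ 2 # 2 # suf) = 0" for pre suf unfolding c'_def by (rule Z_restrict(1)[OF R])
    have Z5: "c' (pre @ 5 # 5 # suf) = 0" for pre suf unfolding c'_def by (rule Z_restrict(2)[OF R])
    define \<alpha> where "\<alpha> = c' (replicate m 1)"
    define \<beta> where "\<beta> = c' (replicate (m - 1) 1 @ [2])"
    define \<gamma> where "\<gamma> = c' (replicate (m - 1) 1 @ [5])"
    define \<delta> where "\<delta> = c' (replicate (m - 2) 1 @ [2, 5])"
    define v where "v = chain_scale \<alpha> A + chain_scale \<beta> B2 + chain_scale \<gamma> B5 + chain_scale \<delta> D"
    have vE: "v \<in> Esp n m lam" unfolding v_def
      by (intro Esp_add Esp_scale AE B2E B5E DE)
    have "u = v"
    proof (rule Det[OF n l uE vE], rule ballI)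
      fix w assume w: "w \<in> Wd m"
      have "u (walk n 0 w) = c' w" unfolding c'_def using w by simp
      also have "\<dots> = \<alpha> * G (MA m) w + \<beta> * G (MB 2 m) w + \<gamma> * G (MB 5 m) w + \<delta> * G (MD m) w"
        unfolding \<alpha>_def \<beta>_def \<gamma>_def \<delta>_def by (rule Comb[OF m H Z2 Z5 w])
      also have "\<dots> = v (walk n 0 w)"
        unfolding v_def using cA cB2 cB5 cD w by (simp add: chain_scale_def)
      finally show "u (walk n 0 w) = v (walk n 0 w)" .
    qed
    moreover have "v \<in> cs.span {A, B2, B5, D}" unfolding v_def
      by (intro cs.span_add cs.span_scale cs.span_base) auto
    ultimately show "u \<in> cs.span {A, B2, B5, D}" by simp
  qed
  have eqS: "\<Omega> = cs.span {A, B2, B5, D}" using span1 span2 by blast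
  have tW: "wA m \<in> Wd m" "wB 2 m \<in> Wd m" "wB 5 m \<in> Wd m" "wD m \<in> Wd m" using test_Wd[OF m] by auto
  note tG = test_G[OF m, where 'a='a]
  have ev: "A (walk n 0 (wA m)) = 1" "B2 (walk n 0 (wA m)) = 0" "B5 (walk n 0 (wA m)) = 0" "D (walk n 0 (wA m)) = 0"
    "A (walk n 0 (wB 2 m)) = 0" "B2 (walk n 0 (wB 2 m)) = 1" "B5 (walk n 0 (wB 2 m)) = 0" "D (walk n 0 (wB 2 m)) = 0"
    "A (walk n 0 (wB 5 m)) = 0" "B2 (walk n 0 (wB 5 m)) = 0" "B5 (walk n 0 (wB 5 m)) = 1" "D (walk n 0 (wB 5 m)) = 0"
    "A (walk n 0 (wD m)) = 0" "B2 (walk n 0 (wD m)) = 0" "B5 (walk n 0 (wD m)) = 0" "D (walk n 0 (wD m)) = 1"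
    using cA cB2 cB5 cD tW tG by simp_all
  have dist: "A \<noteq> B2" "A \<noteq> B5" "A \<noteq> D" "B2 \<noteq> B5" "B2 \<noteq> D" "B5 \<noteq> D"
    using ev by (metis zero_neq_one)+
  have card: "card {A, B2, B5, D} = 4" using dist by simp
  have indep: "cs.independent {A, B2, B5, D}"
  proof
    assume "cs.dependent {A, B2, B5, D}"
    then obtain c where c: "\<exists>v\<in>{A, B2, B5, D}. c v \<noteq> 0" and s: "(\<Sum>v\<in>{A, B2, B5, D}. chain_scale (c v) v) = 0"
      using cs.dependent_finite[of "{A, B2, B5, D}"] by auto
    have e: "(\<Sum>v\<in>{A, B2, B5, D}. c v * v q) = 0" for q
      using fun_cong[OF s, of q] by (simp add: sum_fun_apply chain_scale_def)
    have "c A = 0" using e[of "walk n 0 (wA m)"] dist ev by simp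
    moreover have "c B2 = 0" using e[of "walk n 0 (wB 2 m)"] dist ev by simp
    moreover have "c B5 = 0" using e[of "walk n 0 (wB 5 m)"] dist ev by simp
    moreover have "c D = 0" using e[of "walk n 0 (wD m)"] dist ev by simp
    ultimately show False using c by auto
  qed
  have "cs.dim \<Omega> = 4" unfolding eqS using cs.dim_span_eq_card_independent[OF indep] card by simp
  then show ?thesis using eqS unfolding \<Omega>_def A_def B2_def B5_def D_def by simp
qed


end
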